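(* Let $\vartheta$ be a compatible, recognisable random substitution on an alphabet $\mathcal A$ with $d$ letters. Then $A_n\subseteq A_{n+1}$ for all $n\ge1$, and $A=\bigcup_{n\ge1}A_n$ is a normal subgroup of the shuffle group $\Gamma$ of index at most $2^d$.
   Context: A random substitution on a finite alphabet $\mathcal A$ is a map $\vartheta$ from $\mathcal A$ to non-empty finite sets of non-empty words, extended to words by concatenating choices and iterated; elements of $\vartheta^n(a)$ are level-$n$ inflation words of type $a$. $X_\vartheta\subseteq\mathcal A^{\mathbb Z}$ is the set of sequences all of whose subwords are legal (subwords of words in some $\vartheta^p(a)$), with shift $\sigma$. $\vartheta$ is compatible if for each $a$ all words in $\vartheta(a)$ have the same letter counts; a compatible $\vartheta$ is recognisable if each $x\in X_\vartheta$ has a unique $y\in X_\vartheta$ and unique $0\le k\le|\vartheta(y_0)|-1$ with $\sigma^{-k}(x)\in\vartheta(y)$ (where $\vartheta(y)$ is the set of sequences $\cdots w_{-1}w_0w_1\cdots$, $w_i\in\vartheta(y_i)$, $w_0$ starting at index 0). Then every $\vartheta^n$ is recognisable, so each $x$ is uniquely a bi-infinite concatenation of level-$n$ inflation words with uniquely determined positions and types. For a permutation $\alpha$ of $\vartheta^n(a)$, $f_\alpha\in\operatorname{Aut}(X_\vartheta)$ replaces each level-$n$ inflation word $u_i$ of type $a$ in this decomposition by $\alpha(u_i)$. $\Gamma_{n,a}=\{f_\alpha:\alpha\in\operatorname{Sym}(\vartheta^n(a))\}$, $\Gamma_n=\prod_a\Gamma_{n,a}$ (an increasing chain in $n$), $\Gamma=\bigcup_n\Gamma_n$.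 $A_{n,a}=\{f_\alpha:\alpha$ an even permutation of $\vartheta^n(a)\}$ and $A_n=\prod_a A_{n,a}$. *)

theory Defs
  imports "HOL-Algebra.Algebra" "HOL-Combinatorics.Permutations" "HOL-Library.Sublist"
begin

definition rand_subst :: "('a \<Rightarrow> 'a list set) \<Rightarrow> bool" where
  "rand_subst \<theta> \<longleftrightarrow> (\<forall>a. finite (\<theta> a) \<and> \<theta> a \<noteq> {} \<and> [] \<notin> \<theta> a)"

fun subst_word :: "('a \<Rightarrow> 'a list set) \<Rightarrow> 'a list \<Rightarrow> 'a list set" where
  "subst_word \<theta> [] = {[]}"
| "subst_word \<theta> (a # w) = {u @ v | u v. u \<in> \<theta> a \<and> v \<in> subst_word \<theta> w}"

fun subst_pow :: "('a \<Rightarrow> 'a list set) \<Rightarrow> nat \<Rightarrow> 'a \<Rightarrow> 'a list set" where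
  "subst_pow \<theta> 0 a = {[a]}"
| "subst_pow \<theta> (Suc n) a = (\<Union>u \<in> subst_pow \<theta> n a. subst_word \<theta> u)"

definition legal :: "('a \<Rightarrow> 'a list set) \<Rightarrow> 'a list \<Rightarrow> bool" where
  "legal \<theta> w \<longleftrightarrow> (\<exists>p a v. v \<in> subst_pow \<theta> p a \<and> sublist w v)"

definition Xsub :: "('a \<Rightarrow> 'a list set) \<Rightarrow> (int \<Rightarrow> 'a) set" where
  "Xsub \<theta> = {x. \<forall>i k. legal \<theta> (map (\<lambda>j. x (i + int j)) [0..<k])}"

definition compatible :: "('a \<Rightarrow> 'a list set) \<Rightarrow> bool" where
  "compatible \<theta> \<longleftrightarrow> (\<forall>a. \<forall>u\<in>\<theta> a. \<forall>v\<in>\<theta> a. \<forall>b. count (mset u) b = count (mset v) b)"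

(* |theta(a)|: the common length of the words in theta(a) (for compatible theta) *)
definition slen :: "('a \<Rightarrow> 'a list set) \<Rightarrow> 'a \<Rightarrow> nat" where
  "slen \<theta> a = length (SOME u. u \<in> \<theta> a)"

(* z \<in> theta(y): z = ... w_{-1} w_0 w_1 ... with w_i \<in> theta(y_i), w_0 starting at index 0;
   p i is the starting index of w_i *)
definition in_image :: "('a \<Rightarrow> 'a list set) \<Rightarrow> (int \<Rightarrow> 'a) \<Rightarrow> (int \<Rightarrow> 'a) \<Rightarrow> bool" where
  "in_image \<theta> y z \<longleftrightarrow> (\<exists>w p. (\<forall>i. w i \<in> \<theta> (y i)) \<and> p 0 = 0 \<and>
      (\<forall>i. p (i + 1) = p i + int (length (w i))) \<and>
      (\<forall>i j. j < length (w i) \<longrightarrow> z (p i + int j) = w i ! j))"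

(* sigma^{-k} x, where (sigma x)_i = x_{i+1} *)
definition shift_back :: "nat \<Rightarrow> (int \<Rightarrow> 'a) \<Rightarrow> (int \<Rightarrow> 'a)" where
  "shift_back k x = (\<lambda>i. x (i - int k))"

definition recognisable :: "('a \<Rightarrow> 'a list set) \<Rightarrow> bool" where
  "recognisable \<theta> \<longleftrightarrow> compatible \<theta> \<and>
     (\<forall>x \<in> Xsub \<theta>. \<exists>!(y, k). y \<in> Xsub \<theta> \<and> k < slen \<theta> (y 0) \<and> in_image \<theta> y (shift_back k x))"

(* f_alpha for a family alpha (alpha a a permutation of theta^n(a)): in the (unique) decomposition
   of x into level-n inflation words, replace each word u_i of type a by alpha a u_i.
   Defined as an element of the symmetric group of X_theta (extensional outside X_theta). *)
definition shuffle_map :: "('a \<Rightarrow> 'a list set) \<Rightarrow> nat \<Rightarrow> ('a \<Rightarrow> 'a list \<Rightarrow> 'a list)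
    \<Rightarrow> (int \<Rightarrow> 'a) \<Rightarrow> (int \<Rightarrow> 'a)" where
  "shuffle_map \<theta> n \<alpha> = restrict (\<lambda>x. THE x'. \<exists>y k w p.
       y \<in> Xsub \<theta> \<and> k < slen (subst_pow \<theta> n) (y 0) \<and>
       (\<forall>i. w i \<in> subst_pow \<theta> n (y i)) \<and> p 0 = 0 \<and>
       (\<forall>i. p (i + 1) = p i + int (length (w i))) \<and>
       (\<forall>i j. j < length (w i) \<longrightarrow> x (p i + int j - int k) = w i ! j) \<and>
       (\<forall>i j. j < length (w i) \<longrightarrow> x' (p i + int j - int k) = \<alpha> (y i) (w i) ! j))
     (Xsub \<theta>)"

definition Gamma_na :: "('a \<Rightarrow> 'a list set) \<Rightarrow> nat \<Rightarrow> 'a \<Rightarrow> ((int \<Rightarrow> 'a) \<Rightarrow> (int \<Rightarrow> 'a)) set" where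
  "Gamma_na \<theta> n a = {shuffle_map \<theta> n (\<lambda>b. if b = a then \<beta> else id) | \<beta>. \<beta> permutes subst_pow \<theta> n a}"

definition Gamma_n :: "('a \<Rightarrow> 'a list set) \<Rightarrow> nat \<Rightarrow> ((int \<Rightarrow> 'a) \<Rightarrow> (int \<Rightarrow> 'a)) set" where
  "Gamma_n \<theta> n = {shuffle_map \<theta> n \<alpha> | \<alpha>. \<forall>a. \<alpha> a permutes subst_pow \<theta> n a}"

definition A_n :: "('a \<Rightarrow> 'a list set) \<Rightarrow> nat \<Rightarrow> ((int \<Rightarrow> 'a) \<Rightarrow> (int \<Rightarrow> 'a)) set" where
  "A_n \<theta> n = {shuffle_map \<theta> n \<alpha> | \<alpha>. \<forall>a. \<alpha> a permutes subst_pow \<theta> n a \<and> evenperm (\<alpha> a)}"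

definition Gamma :: "('a \<Rightarrow> 'a list set) \<Rightarrow> ((int \<Rightarrow> 'a) \<Rightarrow> (int \<Rightarrow> 'a)) set" where
  "Gamma \<theta> = (\<Union>n. Gamma_n \<theta> n)"

definition A_all :: "('a \<Rightarrow> 'a list set) \<Rightarrow> ((int \<Rightarrow> 'a) \<Rightarrow> (int \<Rightarrow> 'a)) set" where
  "A_all \<theta> = (\<Union>n\<in>{1..}. A_n \<theta> n)"

definition Gamma_group :: "('a \<Rightarrow> 'a list set) \<Rightarrow> ((int \<Rightarrow> 'a) \<Rightarrow> (int \<Rightarrow> 'a)) monoid" where
  "Gamma_group \<theta> = (BijGroup (Xsub \<theta>)) \<lparr>carrier := Gamma \<theta>\<rparr>"

end

theory Submission
  imports Defs
begin

definition seg :: "(int \<Rightarrow> 'a) \<Rightarrow> int \<Rightarrow> nat \<Rightarrow> 'a list" where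
  "seg x a k = map (\<lambda>j. x (a + int j)) [0..<k]"

lemma length_seg[simp]: "length (seg x a k) = k"
  by (simp add: seg_def)

lemma nth_seg[simp]: "j < k \<Longrightarrow> seg x a k ! j = x (a + int j)"
  by (simp add: seg_def)

lemma seg_add: "seg x a (p + q) = seg x a p @ seg x (a + int p) q"
  by (rule nth_equalityI) (auto simp: nth_append add.assoc)

lemma seg_shift: "seg (\<lambda>m. x (m + s)) a k = seg x (a + s) k"
  by (rule nth_equalityI) (auto simp: algebra_simps)

lemma seg_one: "seg x a (Suc 0) = [x a]"
  by (simp add: seg_def)

lemma seg_mid:
  assumes "seg x a N = A @ B @ C"
  shows "seg x (a + int (length A)) (length B) = B"
proof -
  have N: "N = length A + length B + length C" using arg_cong[OF assms, of length] by simp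
  have "seg x a N = seg x a (length A) @ seg x (a + int (length A)) (length B) @
      seg x (a + int (length A) + int (length B)) (length C)"
    unfolding N by (simp add: seg_add add.assoc)
  with assms show ?thesis by (simp add: append_eq_append_conv)
qed

lemma seg_sublist:
  assumes "a \<le> i" "i + int k \<le> a + int N"
  shows "sublist (seg x i k) (seg x a N)"
proof -
  define p where "p = nat (i - a)"
  define q where "q = N - p - k"
  have i: "i = a + int p" using assms p_def by simp
  have N: "N = p + k + q" using assms unfolding p_def q_def by linarith
  have "seg x a N = seg x a p @ seg x i k @ seg x (i + int k) q"
    unfolding N i by (simp add: seg_add add.assoc)
  then show ?thesis unfolding sublist_def by blast
qed

lemma Xsub_seg: "Xsub \<theta> = {x. \<forall>i k. legal \<theta> (seg x i k)}"
  by (simp add: Xsub_def seg_def)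

lemma legal_sublist: "legal \<theta> w \<Longrightarrow> sublist v w \<Longrightarrow> legal \<theta> v"
  unfolding legal_def by (meson sublist_order.order_trans)

lemma legal_Nil: "legal \<theta> []"
  unfolding legal_def by (rule exI[of _ 0], rule exI[of _ undefined]) auto

lemma Xsub_shift: "y \<in> Xsub \<theta> \<Longrightarrow> (\<lambda>i. y (i + t)) \<in> Xsub \<theta>"
  unfolding Xsub_seg by (auto simp: seg_shift)

lemma concat_eq_pointwise:
  "length A = length B \<Longrightarrow> (\<forall>j<length A. length (A!j) = length (B!j)) \<Longrightarrow> concat A = concat B \<Longrightarrow> A = B"
proof (induction A arbitrary: B)
  case Nil then show ?case by simp
next
  case (Cons a A)
  then obtain b B' where B: "B = b # B'" by (cases B) auto
  with Cons.prems have "length a = length b" by force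
  with Cons.prems B have "a = b" "concat A = concat B'" by (auto simp: append_eq_append_conv)
  moreover have "A = B'"
    using Cons.IH[of B'] Cons.prems B \<open>concat A = concat B'\<close> by force
  ultimately show ?case using B by simp
qed



lemma ex_concat_Cons:
  "(\<exists>ws. x = concat ws \<and> list_all2 P (a#u) ws) \<longleftrightarrow> (\<exists>w ws'. x = w @ concat ws' \<and> P a w \<and> list_all2 P u ws')"
proof
  assume "\<exists>ws. x = concat ws \<and> list_all2 P (a#u) ws"
  then obtain ws where "x = concat ws" "list_all2 P (a#u) ws" by blast
  then obtain w ws' where "ws = w # ws'" "P a w" "list_all2 P u ws'" by (auto simp: list_all2_Cons1)
  then show "\<exists>w ws'. x = w @ concat ws' \<and> P a w \<and> list_all2 P u ws'"
    using \<open>x = concat ws\<close> by auto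
next
  assume "\<exists>w ws'. x = w @ concat ws' \<and> P a w \<and> list_all2 P u ws'"
  then obtain w ws' where "x = w @ concat ws'" "P a w" "list_all2 P u ws'" by blast
  then show "\<exists>ws. x = concat ws \<and> list_all2 P (a#u) ws"
    by (intro exI[of _ "w # ws'"]) auto
qed

definition pw :: "('a \<Rightarrow> 'a list set) \<Rightarrow> nat \<Rightarrow> 'a list \<Rightarrow> 'a list set" where
  "pw \<theta> n u = {concat ws | ws. list_all2 (\<lambda>a w. w \<in> subst_pow \<theta> n a) u ws}"

lemma pw_Nil[simp]: "pw \<theta> n [] = {[]}"
  by (simp add: pw_def)

lemma pw_Cons: "pw \<theta> n (a # u) = {w @ W | w W. w \<in> subst_pow \<theta> n a \<and> W \<in> pw \<theta> n u}"
  unfolding pw_def Setcompr_eq_image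
  apply (rule Set.set_eqI)
  apply (simp only: mem_Collect_eq ex_concat_Cons)
  apply blast
  done

lemma subst_word_eq: "subst_word \<theta> u = {concat ws | ws. list_all2 (\<lambda>a w. w \<in> \<theta> a) u ws}"
proof (induction u)
  case Nil then show ?case by simp
next
  case (Cons a u)
  show ?case
    apply (rule Set.set_eqI)
    apply (simp only: mem_Collect_eq ex_concat_Cons subst_word.simps Cons.IH)
    apply blast
    done
qed


lemma cons_append_gen:
  assumes N: "F [] = {[]}" and C: "\<And>a u. F (a#u) = {w @ W | w W. w \<in> G a \<and> W \<in> F u}"
  shows "F (u @ v) = {w1 @ w2 | w1 w2. w1 \<in> F u \<and> w2 \<in> F v}"
proof (induction u)
  case Nil then show ?case using N by simp
next
  case (Cons a u)
  show ?case
  proof (rule Set.set_eqI, rule iffI)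
    fix x assume "x \<in> F ((a#u)@v)"
    then obtain w W where 1: "x = w @ W" "w \<in> G a" "W \<in> F (u@v)" by (auto simp: C)
    then obtain w1 w2 where 2: "W = w1 @ w2" "w1 \<in> F u" "w2 \<in> F v" using Cons.IH by auto
    have "w @ w1 \<in> F (a#u)" using 1 2 by (auto simp: C)
    then show "x \<in> {w1 @ w2 | w1 w2. w1 \<in> F (a#u) \<and> w2 \<in> F v}" using 1 2
      by (intro CollectI exI[of _ "w @ w1"] exI[of _ w2]) auto
  next
    fix x assume "x \<in> {w1 @ w2 | w1 w2. w1 \<in> F (a#u) \<and> w2 \<in> F v}"
    then obtain w1 w2 where 1: "x = w1 @ w2" "w1 \<in> F (a#u)" "w2 \<in> F v" by auto
    then obtain w W where 2: "w1 = w @ W" "w \<in> G a" "W \<in> F u" by (auto simp: C)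
    have "W @ w2 \<in> F (u @ v)" using Cons.IH 1 2 by auto
    then show "x \<in> F ((a#u)@v)" using 1 2 by (auto simp: C)
  qed
qed

lemma pw_append: "pw \<theta> n (u @ v) = {w1 @ w2 | w1 w2. w1 \<in> pw \<theta> n u \<and> w2 \<in> pw \<theta> n v}"
  by (rule cons_append_gen[OF pw_Nil pw_Cons])

lemma subst_word_append:
  "subst_word \<theta> (u @ v) = {w1 @ w2 | w1 w2. w1 \<in> subst_word \<theta> u \<and> w2 \<in> subst_word \<theta> v}"
  by (rule cons_append_gen) auto

lemma subst_pow_one[simp]: "subst_pow \<theta> (Suc 0) = \<theta>"
  by (rule ext) auto

lemma pw_0: "pw \<theta> 0 u = {u}"
  by (induction u) (auto simp: pw_Cons)

lemma pw_Suc: "pw \<theta> (Suc n) u = (\<Union>v\<in>pw \<theta> n u. subst_word \<theta> v)"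
proof (induction u)
  case Nil then show ?case by simp
next
  case (Cons a u)
  show ?case
  proof (rule Set.set_eqI, rule iffI)
    fix x assume "x \<in> pw \<theta> (Suc n) (a # u)"
    then obtain w W where 1: "x = w @ W" "w \<in> subst_pow \<theta> (Suc n) a" "W \<in> pw \<theta> (Suc n) u"
      by (auto simp: pw_Cons)
    then obtain v1 where v1: "v1 \<in> subst_pow \<theta> n a" "w \<in> subst_word \<theta> v1" by auto
    obtain v2 where v2: "v2 \<in> pw \<theta> n u" "W \<in> subst_word \<theta> v2" using 1 Cons.IH by auto
    have "v1 @ v2 \<in> pw \<theta> n (a # u)" using v1 v2 by (auto simp: pw_Cons)
    moreover have "x \<in> subst_word \<theta> (v1 @ v2)" using 1 v1 v2 by (auto simp: subst_word_append)
    ultimately show "x \<in> (\<Union>v\<in>pw \<theta> n (a#u). subst_word \<theta> v)" by blast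
  next
    fix x assume "x \<in> (\<Union>v\<in>pw \<theta> n (a#u). subst_word \<theta> v)"
    then obtain v where v: "v \<in> pw \<theta> n (a#u)" "x \<in> subst_word \<theta> v" by blast
    then obtain v1 v2 where 1: "v = v1 @ v2" "v1 \<in> subst_pow \<theta> n a" "v2 \<in> pw \<theta> n u"
      by (auto simp: pw_Cons)
    then obtain w1 w2 where 2: "x = w1 @ w2" "w1 \<in> subst_word \<theta> v1" "w2 \<in> subst_word \<theta> v2"
      using v by (auto simp: subst_word_append)
    have "w1 \<in> subst_pow \<theta> (Suc n) a" using 1 2 by auto
    moreover have "w2 \<in> pw \<theta> (Suc n) u" using 1 2 Cons.IH by auto
    ultimately show "x \<in> pw \<theta> (Suc n) (a # u)" using 2 by (auto simp: pw_Cons)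
  qed
qed

lemma subst_pow_add: "subst_pow \<theta> (n + m) b = (\<Union>u\<in>subst_pow \<theta> n b. pw \<theta> m u)"
proof (induction m)
  case 0 then show ?case by (simp add: pw_0)
next
  case (Suc m)
  have "subst_pow \<theta> (n + Suc m) b = (\<Union>v\<in>subst_pow \<theta> (n + m) b. subst_word \<theta> v)" by simp
  also have "\<dots> = (\<Union>u\<in>subst_pow \<theta> n b. \<Union>v\<in>pw \<theta> m u. subst_word \<theta> v)" unfolding Suc.IH by blast
  also have "\<dots> = (\<Union>u\<in>subst_pow \<theta> n b. pw \<theta> (Suc m) u)" by (simp add: pw_Suc)
  finally show ?case .
qed

lemma pw_sublist:
  assumes "sublist v V" "w \<in> pw \<theta> n v" "\<And>a. subst_pow \<theta> n a \<noteq> {}"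
  shows "\<exists>W\<in>pw \<theta> n V. sublist w W"
proof -
  have ne: "pw \<theta> n u \<noteq> {}" for u
  proof (induction u)
    case (Cons a u)
    then obtain W where "W \<in> pw \<theta> n u" by auto
    moreover obtain w where "w \<in> subst_pow \<theta> n a" using assms(3) by auto
    ultimately show ?case by (auto simp: pw_Cons)
  qed simp
  obtain A B where V: "V = A @ v @ B" using assms(1) unfolding sublist_def by blast
  obtain wa wb where "wa \<in> pw \<theta> n A" "wb \<in> pw \<theta> n B" using ne by blast
  then have "wa @ w @ wb \<in> pw \<theta> n V" using assms(2) unfolding V pw_append by blast
  then show ?thesis unfolding sublist_def by blast
qed


section \<open>Cut sequences\<close>

lemma cut_mono_aux:
  fixes c :: "int \<Rightarrow> int"
  assumes "\<And>i. c i < c (i+1)"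
  shows "c i < c (i + int k + 1)"
proof (induction k)
  case 0 then show ?case using assms by simp
next
  case (Suc k)
  have "c (i + int k + 1) < c (i + int k + 1 + 1)" using assms by blast
  moreover have eq: "i + int (Suc k) + 1 = i + int k + 1 + 1" by simp
  ultimately show ?case using Suc by (metis less_trans)
qed

lemma cut_mono:
  fixes c :: "int \<Rightarrow> int"
  assumes "\<And>i. c i < c (i+1)" "i < j"
  shows "(c i :: int) < c j"
proof -
  have "j = i + int (nat (j - i - 1)) + 1" using assms(2) by simp
  then show ?thesis using cut_mono_aux[of c i "nat (j - i - 1)", OF assms(1)] by simp
qed

lemma cut_le:
  fixes c :: "int \<Rightarrow> int"
  assumes "\<And>i. c i < c (i+1)" "i \<le> j"
  shows "(c i :: int) \<le> c j"
  using cut_mono[of c i j, OF assms(1)] assms(2) by (cases "i = j") auto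

lemma cut_less_iff:
  fixes c :: "int \<Rightarrow> int"
  assumes "\<And>i. c i < c (i+1)"
  shows "((c i :: int) < c j) = (i < j)"
proof
  assume h: "c i < c j"
  show "i < j"
  proof (rule ccontr)
    assume "\<not> i < j"
    then have "j \<le> i" by simp
    then have "c j \<le> c i" by (rule cut_le[of c, OF assms])
    with h show False by simp
  qed
next
  assume "i < j" then show "c i < c j" by (rule cut_mono[of c, OF assms])
qed

lemma cut_inj:
  fixes c :: "int \<Rightarrow> int"
  assumes "\<And>i. c i < c (i+1)" "(c i :: int) = c j"
  shows "i = j"
proof (cases i j rule: linorder_cases)
  case less then have "c i < c j" by (rule cut_mono[of c, OF assms(1)])
  then show ?thesis using assms(2) by simp
next
  case greater then have "c j < c i" by (rule cut_mono[of c, OF assms(1)])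
  then show ?thesis using assms(2) by simp
qed simp

lemma cut_grow:
  fixes c :: "int \<Rightarrow> int"
  assumes "\<And>i. c i < c (i+1)"
  shows "c i + int k \<le> (c (i + int k) :: int)"
proof (induction k)
  case (Suc k)
  have "c (i + int k) < c (i + int k + 1)" using assms by blast
  moreover have "c (i + int (Suc k)) = c (i + int k + 1)" by (simp add: algebra_simps)
  ultimately show ?case using Suc by linarith
qed simp

lemma cut_grow_neg:
  fixes c :: "int \<Rightarrow> int"
  assumes "\<And>i. c i < c (i+1)"
  shows "(c (i - int k) :: int) \<le> c i - int k"
  using cut_grow[of c "i - int k" k, OF assms] by simp

lemma block_ex:
  fixes c :: "int \<Rightarrow> int"
  assumes "\<And>i. c i < c (i+1)"
  shows "\<exists>i. (c i :: int) \<le> m \<and> m < c (i+1)"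
proof -
  have step: "\<forall>i. c i \<le> m \<longrightarrow> m < c i + int K \<longrightarrow> (\<exists>i'. c i' \<le> m \<and> m < c (i'+1))" for K
  proof (induction K)
    case 0 then show ?case by simp
  next
    case (Suc K)
    show ?case
    proof (intro allI impI)
      fix i assume h: "c i \<le> m" "m < c i + int (Suc K)"
      show "\<exists>i'. c i' \<le> m \<and> m < c (i'+1)"
      proof (cases "m < c (i+1)")
        case True then show ?thesis using h by blast
      next
        case False
        have "c i + 1 \<le> c (i+1)" using assms[of i] by simp
        then have h2: "c (i+1) \<le> m" "m < c (i+1) + int K" using False h by auto
        from Suc.IH have "c (i+1) \<le> m \<longrightarrow> m < c (i+1) + int K \<longrightarrow> (\<exists>i'. c i' \<le> m \<and> m < c (i'+1))"
          by blast
        then show ?thesis using h2 by blast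
      qed
    qed
  qed
  define i0 where "i0 = 0 - int (nat (c 0 - m))"
  have "c i0 \<le> c 0 - int (nat (c 0 - m))" unfolding i0_def by (rule cut_grow_neg[of c, OF assms])
  then have "c i0 \<le> m" by linarith
  moreover have "m < c i0 + int (nat (m - c i0) + 1)" by simp
  ultimately show ?thesis using step by blast
qed

lemma block_uniq:
  fixes c :: "int \<Rightarrow> int"
  assumes "\<And>i. c i < c (i+1)" "(c i :: int) \<le> m" "m < c (i+1)" "c j \<le> m" "m < c (j+1)"
  shows "i = j"
proof (rule ccontr)
  assume "i \<noteq> j"
  then consider "i + 1 \<le> j" | "j + 1 \<le> i" by linarith
  then show False
  proof cases
    case 1 then show False using cut_le[of c, OF assms(1) 1] assms by simp
  next
    case 2 then show False using cut_le[of c, OF assms(1) 2] assms by simp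
  qed
qed

definition bidx :: "(int \<Rightarrow> int) \<Rightarrow> int \<Rightarrow> int" where
  "bidx c m = (THE i. c i \<le> m \<and> m < c (i+1))"

lemma bidx:
  fixes c :: "int \<Rightarrow> int"
  assumes "\<And>i. c i < c (i+1)"
  shows "c (bidx c m) \<le> m \<and> m < c (bidx c m + 1)"
proof -
  obtain i where i: "c i \<le> m \<and> m < c (i+1)" using block_ex[of c, OF assms] by blast
  have "bidx c m = i" unfolding bidx_def
  proof (rule the_equality)
    show "c i \<le> m \<and> m < c (i+1)" by (rule i)
  next
    fix j assume "c j \<le> m \<and> m < c (j+1)"
    then show "j = i" using block_uniq[of c j m i, OF assms] i by blast
  qed
  then show ?thesis using i by simp
qed

lemma bidx_eq:
  fixes c :: "int \<Rightarrow> int"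
  assumes "\<And>i. c i < c (i+1)" "c i \<le> m" "m < c (i+1)"
  shows "bidx c m = i"
proof -
  have b: "c (bidx c m) \<le> m \<and> m < c (bidx c m + 1)" by (rule bidx[of c, OF assms(1)])
  show ?thesis using block_uniq[of c "bidx c m" m i, OF assms(1)] assms(2,3) b by blast
qed

definition glue :: "(int \<Rightarrow> int) \<Rightarrow> (int \<Rightarrow> 'a list) \<Rightarrow> int \<Rightarrow> 'a" where
  "glue c W m = W (bidx c m) ! nat (m - c (bidx c m))"

lemma glue_nth:
  fixes c :: "int \<Rightarrow> int"
  assumes "\<And>i. c (i+1) = c i + int (length (W i))" "\<And>i. W i \<noteq> []" "j < length (W i)"
  shows "glue c W (c i + int j) = W i ! j"
proof -
  have sm: "c i < c (i+1)" for i using assms(1)[of i] assms(2)[of i] by simp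
  have "bidx c (c i + int j) = i" using assms(1)[of i] assms(3) by (intro bidx_eq[of c, OF sm]) auto
  then show ?thesis unfolding glue_def by simp
qed

lemma seg_glue:
  fixes c :: "int \<Rightarrow> int"
  assumes "\<And>i. c (i+1) = c i + int (length (W i))" "\<And>i. W i \<noteq> []"
  shows "seg (glue c W) (c i) (length (W i)) = W i"
  by (rule nth_equalityI) (auto simp: glue_nth[of c W, OF assms])

lemma cover:
  fixes c :: "int \<Rightarrow> int"
  assumes "\<And>i. c (i+1) = c i + int (g i)" "\<And>i. 0 < g i"
  shows "\<exists>i j. j < g i \<and> m = c i + int j"
proof -
  have sm: "c i < c (i+1)" for i using assms(1)[of i] assms(2)[of i] by simp
  obtain i where "c i \<le> m" "m < c (i+1)" using block_ex[of c, OF sm] by blast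
  then show ?thesis using assms(1)[of i] by (intro exI[of _ i] exI[of _ "nat (m - c i)"]) auto
qed

lemma fun_eq_blocks:
  fixes c :: "int \<Rightarrow> int"
  assumes "\<And>i. c (i+1) = c i + int (g i)" "\<And>i. 0 < g i"
    "\<And>i j. j < g i \<Longrightarrow> x (c i + int j) = x' (c i + int j)"
  shows "x = x'"
proof
  fix m
  obtain i j where "j < g i" "m = c i + int j" using cover[of c g m, OF assms(1,2)] by blast
  then show "x m = x' m" using assms(3) by blast
qed

lemma gap_const:
  fixes f h :: "int \<Rightarrow> int"
  assumes "\<And>i. f (i+1) = f i + g i" "\<And>i. h (i+1) = h i + g i"
  shows "f i - h i = f 0 - h 0"
proof (induction i rule: int_induct[where k = 0])
  case base then show ?case by simp
next
  case (step1 i) then show ?case using assms[of i] by simp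
next
  case (step2 i) then show ?case using assms[of "i - 1"] by simp
qed

lemma telescope:
  fixes c :: "int \<Rightarrow> int"
  assumes "\<And>i. c (i+1) = c i + int (g i)"
  shows "c (a + int k) = c a + int (\<Sum>j<k. g (a + int j)) \<and>
    seg x (c a) (\<Sum>j<k. g (a + int j)) = concat (map (\<lambda>j. seg x (c (a + int j)) (g (a + int j))) [0..<k])"
proof (induction k)
  case 0 then show ?case by (simp add: seg_def)
next
  case (Suc k)
  have e: "c (a + int (Suc k)) = c (a + int k) + int (g (a + int k))"
    using assms[of "a + int k"] by (simp add: algebra_simps)
  show ?case using Suc e by (simp add: seg_add)
qed


lemma mkcut: "\<exists>e::int\<Rightarrow>int. \<forall>i. e (i+1) = e i + g i"
proof -
  define e :: "int \<Rightarrow> int" where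
    "e i = (if 0 \<le> i then (\<Sum>j\<in>{0..<i}. g j) else - (\<Sum>j\<in>{i..<0}. g j))" for i
  have "e (i+1) = e i + g i" for i
  proof (cases "0 \<le> i")
    case True
    have "{0..<i+1} = insert i {0..<i}" using True by auto
    then show ?thesis using True unfolding e_def by (simp add: add.commute)
  next
    case False
    have s: "{i..<0} = insert i {i+1..<0}" using False by auto
    show ?thesis
    proof (cases "i + 1 = 0")
      case True
      then have "{i+1..<0} = {}" by auto
      then show ?thesis using False True s unfolding e_def by simp
    next
      case F2: False
      then show ?thesis using False s unfolding e_def by simp
    qed
  qed
  then show ?thesis by blast
qed

locale rsub =
  fixes \<theta> :: "'a \<Rightarrow> 'a list set"
  assumes rs: "rand_subst \<theta>" and cp: "compatible \<theta>"
begin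

abbreviation XX where "XX \<equiv> Xsub \<theta>"

definition L :: "nat \<Rightarrow> 'a \<Rightarrow> nat" where "L n a = slen (subst_pow \<theta> n) a"

lemma th_ne: "\<theta> a \<noteq> {}" and th_fin: "finite (\<theta> a)" and th_nil: "[] \<notin> \<theta> a"
  using rs unfolding rand_subst_def by auto

lemma sw_ne: "subst_word \<theta> v \<noteq> {}"
proof (induction v)
  case (Cons a v)
  obtain u where "u \<in> \<theta> a" using th_ne by blast
  moreover obtain w where "w \<in> subst_word \<theta> v" using Cons by blast
  ultimately show ?case by auto
qed simp

lemma sp_ne: "subst_pow \<theta> n a \<noteq> {}"
proof (induction n)
  case (Suc n)
  then obtain v where "v \<in> subst_pow \<theta> n a" by blast
  moreover obtain w where "w \<in> subst_word \<theta> v" using sw_ne by blast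
  ultimately show ?case by auto
qed simp

lemma sw_fin: "finite (subst_word \<theta> v)"
proof (induction v)
  case (Cons a v)
  have "{u @ w | u w. u \<in> \<theta> a \<and> w \<in> subst_word \<theta> v} = (\<lambda>(u,w). u @ w) ` (\<theta> a \<times> subst_word \<theta> v)"
    by auto
  then show ?case using Cons th_fin by simp
qed simp

lemma sp_fin: "finite (subst_pow \<theta> n a)"
  by (induction n) (auto simp: sw_fin)

lemma sw_nonnil: "v \<noteq> [] \<Longrightarrow> w \<in> subst_word \<theta> v \<Longrightarrow> w \<noteq> []"
  by (cases v) (auto simp: th_nil)

lemma sp_nonnil: "w \<in> subst_pow \<theta> n a \<Longrightarrow> w \<noteq> []"
proof (induction n arbitrary: w)
  case (Suc n)
  then obtain v where "v \<in> subst_pow \<theta> n a" "w \<in> subst_word \<theta> v" by auto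
  then show ?case using Suc.IH sw_nonnil by blast
qed simp

definition M :: "'a \<Rightarrow> 'a multiset" where "M b = mset (SOME u. u \<in> \<theta> b)"

lemma th_mset: "u \<in> \<theta> b \<Longrightarrow> mset u = M b"
proof -
  assume u: "u \<in> \<theta> b"
  then have s: "(SOME u. u \<in> \<theta> b) \<in> \<theta> b" by (rule someI)
  show "mset u = M b" unfolding M_def
  proof (rule multiset_eqI)
    fix z show "count (mset u) z = count (mset (SOME u. u \<in> \<theta> b)) z"
      using cp s u unfolding compatible_def by blast
  qed
qed

lemma sw_mset: "w \<in> subst_word \<theta> v \<Longrightarrow> mset w = sum_mset (image_mset M (mset v))"
proof (induction v arbitrary: w)
  case (Cons a v)
  then obtain u w' where "w = u @ w'" "u \<in> \<theta> a" "w' \<in> subst_word \<theta> v" by auto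
  then show ?case using Cons.IH th_mset by simp
qed simp

lemma sp_mset: "w \<in> subst_pow \<theta> n a \<Longrightarrow> w' \<in> subst_pow \<theta> n a \<Longrightarrow> mset w = mset w'"
proof (induction n arbitrary: w w')
  case (Suc n)
  then obtain v v' where "v \<in> subst_pow \<theta> n a" "w \<in> subst_word \<theta> v"
    "v' \<in> subst_pow \<theta> n a" "w' \<in> subst_word \<theta> v'" by auto
  then have "mset v = mset v'" using Suc.IH by blast
  then show ?case using sw_mset \<open>w \<in> subst_word \<theta> v\<close> \<open>w' \<in> subst_word \<theta> v'\<close> by simp
qed simp

lemma len_L: "w \<in> subst_pow \<theta> n a \<Longrightarrow> length w = L n a"
proof -
  assume w: "w \<in> subst_pow \<theta> n a"
  then have s: "(SOME u. u \<in> subst_pow \<theta> n a) \<in> subst_pow \<theta> n a" by (rule someI)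
  have m: "mset w = mset (SOME u. u \<in> subst_pow \<theta> n a)" using sp_mset[OF w s] .
  have "length w = length (SOME u. u \<in> subst_pow \<theta> n a)" using arg_cong[OF m, of size] by simp
  then show ?thesis by (simp add: L_def slen_def)
qed

lemma L_pos: "0 < L n a"
proof -
  obtain w where "w \<in> subst_pow \<theta> n a" using sp_ne by blast
  then show ?thesis using len_L sp_nonnil by fastforce
qed

lemma L0: "L 0 a = 1"
  using len_L[of "[a]" 0 a] by simp

definition parse :: "nat \<Rightarrow> (int \<Rightarrow> 'a) \<Rightarrow> (int \<Rightarrow> int) \<Rightarrow> (int \<Rightarrow> 'a) \<Rightarrow> bool" where
  "parse n x c y \<longleftrightarrow> (\<forall>i. c (i+1) = c i + int (L n (y i)) \<and> seg x (c i) (L n (y i)) \<in> subst_pow \<theta> n (y i))"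

lemma parse_gap: "parse n x c y \<Longrightarrow> c (i+1) = c i + int (L n (y i))"
  and parse_blk: "parse n x c y \<Longrightarrow> seg x (c i) (L n (y i)) \<in> subst_pow \<theta> n (y i)"
  unfolding parse_def by auto

lemma parse_sm: "parse n x c y \<Longrightarrow> c i < c (i+1)"
  using parse_gap[of n x c y i] L_pos[of n "y i"] by simp

lemma parse_shift_idx:
  assumes "parse n x c y" shows "parse n x (\<lambda>i. c (i+t)) (\<lambda>i. y (i+t))"
  unfolding parse_def
proof (intro allI conjI)
  fix i
  have "c (i + t + 1) = c (i+t) + int (L n (y (i+t)))" by (rule parse_gap[OF assms])
  moreover have "i + 1 + t = i + t + 1" by simp
  ultimately show "c (i + 1 + t) = c (i+t) + int (L n (y (i+t)))" by metis
  show "seg x (c (i+t)) (L n (y (i+t))) \<in> subst_pow \<theta> n (y (i+t))" by (rule parse_blk[OF assms])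
qed

lemma parse_shift_seq: "parse n (\<lambda>m. x (m+s)) c y \<longleftrightarrow> parse n x (\<lambda>i. c i + s) y"
  unfolding parse_def by (auto simp: seg_shift algebra_simps)

lemma parse_pw:
  assumes "parse n z e y"
  shows "e (a + int k) = e a + int (\<Sum>j<k. L n (y (a + int j))) \<and>
    seg z (e a) (\<Sum>j<k. L n (y (a + int j))) \<in> pw \<theta> n (seg y a k)"
proof -
  have g: "\<And>i. e (i+1) = e i + int (L n (y i))" using parse_gap[OF assms] .
  note t = telescope[of e "\<lambda>i. L n (y i)", OF g, of a k z]
  have "list_all2 (\<lambda>b w. w \<in> subst_pow \<theta> n b) (seg y a k)
      (map (\<lambda>j. seg z (e (a + int j)) (L n (y (a + int j)))) [0..<k])"
    unfolding list_all2_conv_all_nth using parse_blk[OF assms] by simp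
  then show ?thesis using t unfolding pw_def by auto
qed

lemma parse_X:
  assumes p: "parse n z e y" and y: "y \<in> XX"
  shows "z \<in> XX"
  unfolding Xsub_seg
proof (intro CollectI allI)
  fix i k
  show "legal \<theta> (seg z i k)"
  proof (cases "k = 0")
    case True then show ?thesis by (simp add: seg_def legal_Nil)
  next
    case False
    have sm: "\<And>i. e i < e (i+1)" using parse_sm[OF p] .
    obtain a where a: "e a \<le> i" "i < e (a+1)" using block_ex[of e, OF sm] by blast
    obtain b where b: "e b \<le> i + int k - 1" "i + int k - 1 < e (b+1)" using block_ex[of e, OF sm] by blast
    have ab: "a \<le> b"
    proof (rule ccontr)
      assume "\<not> a \<le> b"
      then have "b + 1 \<le> a" by simp
      then have "e (b+1) \<le> e a" by (rule cut_le[of e, OF sm])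
      then show False using a b False by linarith
    qed
    define K where "K = nat (b - a) + 1"
    have aK: "a + int K = b + 1" using ab unfolding K_def by simp
    note pp = parse_pw[OF p, of a K]
    define Sg where "Sg = (\<Sum>j<K. L n (y (a + int j)))"
    have e1: "e (b+1) = e a + int Sg" using pp aK unfolding Sg_def by simp
    have w: "seg z (e a) Sg \<in> pw \<theta> n (seg y a K)" using pp unfolding Sg_def by simp
    have "legal \<theta> (seg y a K)" using y unfolding Xsub_seg by blast
    then obtain p0 a0 V where V: "V \<in> subst_pow \<theta> p0 a0" "sublist (seg y a K) V"
      unfolding legal_def by blast
    obtain W where W: "W \<in> pw \<theta> n V" "sublist (seg z (e a) Sg) W"
      using pw_sublist[OF V(2) w sp_ne] by blast
    have "W \<in> (\<Union>u\<in>subst_pow \<theta> p0 a0. pw \<theta> n u)" using V(1) W(1) by blast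
    then have "W \<in> subst_pow \<theta> (p0 + n) a0" by (simp only: subst_pow_add)
    then have "legal \<theta> (seg z (e a) Sg)" unfolding legal_def using W(2) by blast
    moreover have "sublist (seg z i k) (seg z (e a) Sg)"
      by (rule seg_sublist) (use a b e1 in linarith)+
    ultimately show ?thesis by (rule legal_sublist)
  qed
qed

lemma parse_comp:
  assumes d: "parse m x d z" and e: "parse n z e y"
  shows "parse (n+m) x (\<lambda>i. d (e i)) y"
  unfolding parse_def
proof (intro allI conjI)
  fix i
  define l where "l = L n (y i)"
  note pp = parse_pw[OF d, of "e i" l]
  define Sg where "Sg = (\<Sum>j<l. L m (z (e i + int j)))"
  have u: "seg z (e i) l \<in> subst_pow \<theta> n (y i)" using parse_blk[OF e] unfolding l_def .
  have "seg x (d (e i)) Sg \<in> (\<Union>u\<in>subst_pow \<theta> n (y i). pw \<theta> m u)"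
    using pp u unfolding Sg_def by blast
  then have inS: "seg x (d (e i)) Sg \<in> subst_pow \<theta> (n+m) (y i)" by (simp only: subst_pow_add)
  then have SgL: "Sg = L (n+m) (y i)" using len_L by fastforce
  have "e (i+1) = e i + int l" using parse_gap[OF e] unfolding l_def .
  then show "d (e (i+1)) = d (e i) + int (L (n+m) (y i))" using pp SgL unfolding Sg_def by simp
  show "seg x (d (e i)) (L (n+m) (y i)) \<in> subst_pow \<theta> (n+m) (y i)"
    using inS SgL by simp
qed


lemma refine:
  assumes p: "parse (n+m) x c y"
    and F: "\<And>i. U i \<in> subst_pow \<theta> n (y i) \<and> list_all2 (\<lambda>a w. w \<in> subst_pow \<theta> m a) (U i) (WS i)
              \<and> concat (WS i) = seg x (c i) (L (n+m) (y i))"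
  shows "\<exists>d z e. parse m x d z \<and> parse n z e y \<and> (\<forall>i. d (e i) = c i) \<and>
     (\<forall>i. seg z (e i) (L n (y i)) = U i) \<and>
     (\<forall>i j. j < L n (y i) \<longrightarrow> seg x (d (e i + int j)) (L m (z (e i + int j))) = WS i ! j)"
proof -
  obtain e :: "int \<Rightarrow> int" where eg: "\<And>i. e (i+1) = e i + int (L n (y i))"
    using mkcut[of "\<lambda>i. int (L n (y i))"] by blast
  have lenU: "length (U i) = L n (y i)" for i using F[of i] len_L by blast
  have Une: "U i \<noteq> []" for i using F[of i] sp_nonnil by blast
  have lenWS: "length (WS i) = L n (y i)" for i
    using F[of i] lenU list_all2_lengthD by metis
  have WSnth: "j < L n (y i) \<Longrightarrow> WS i ! j \<in> subst_pow \<theta> m (U i ! j)" for i j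
    using F[of i] lenU by (simp add: list_all2_conv_all_nth)
  have eg': "\<And>i. e (i+1) = e i + int (length (U i))" using eg lenU by simp
  have esm: "\<And>i. e i < e (i+1)" using eg L_pos by simp
  define z where "z = glue e U"
  define d where "d m' = (let i = bidx e m' in c i + int (length (concat (take (nat (m' - e i)) (WS i)))))" for m'
  have zb: "z (e i + int j) = U i ! j" if "j < L n (y i)" for i j
    unfolding z_def using glue_nth[of e U, OF eg' Une] that lenU by simp
  have db: "d (e i + int j) = c i + int (length (concat (take j (WS i))))" if "j < L n (y i)" for i j
  proof -
    have "bidx e (e i + int j) = i" using that eg[of i] by (intro bidx_eq[of e, OF esm]) auto
    then show ?thesis unfolding d_def by simp
  qed
  have catL: "length (concat (WS i)) = L (n+m) (y i)" for i using F[of i] by simp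
  have split: "concat (WS i) = concat (take j (WS i)) @ WS i ! j @ concat (drop (Suc j) (WS i))"
    if "j < L n (y i)" for i j
  proof -
    have "WS i = take j (WS i) @ WS i ! j # drop (Suc j) (WS i)"
      using that lenWS by (simp add: id_take_nth_drop)
    then show ?thesis by (metis concat.simps(2) concat_append)
  qed
  have segb: "seg x (d (e i + int j)) (length (WS i ! j)) = WS i ! j" if "j < L n (y i)" for i j
  proof -
    have "seg x (c i) (L (n+m) (y i)) = concat (take j (WS i)) @ WS i ! j @ concat (drop (Suc j) (WS i))"
      using F[of i] split[OF that] by simp
    then show ?thesis using seg_mid db[OF that] by simp
  qed
  have Lz: "L m (z (e i + int j)) = length (WS i ! j)" if "j < L n (y i)" for i j
    using len_L[OF WSnth[OF that]] zb[OF that] by simp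
  have dgap: "d (e i + int j + 1) = d (e i + int j) + int (length (WS i ! j))" if "j < L n (y i)" for i j
  proof (cases "Suc j < L n (y i)")
    case True
    have "e i + int j + 1 = e i + int (Suc j)" by simp
    then have "d (e i + int j + 1) = c i + int (length (concat (take (Suc j) (WS i))))"
      using db[OF True] by metis
    also have "take (Suc j) (WS i) = take j (WS i) @ [WS i ! j]"
      using that lenWS by (simp add: take_Suc_conv_app_nth)
    finally show ?thesis using db[OF that] by simp
  next
    case False
    then have j: "Suc j = L n (y i)" using that by simp
    have "e i + int j + 1 = e (i+1) + int 0" using eg[of i] j by simp
    then have "d (e i + int j + 1) = c (i+1)" using db[of 0 "i+1"] L_pos by simp
    also have "\<dots> = c i + int (length (concat (WS i)))" using parse_gap[OF p, of i] catL by simp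
    also have "drop (Suc j) (WS i) = []" using j lenWS by simp
    then have "length (concat (WS i)) = length (concat (take j (WS i))) + length (WS i ! j)"
      using split[OF that] by simp
    finally show ?thesis using db[OF that] by simp
  qed
  have pm: "parse m x d z"
    unfolding parse_def
  proof (intro allI)
    fix m'
    obtain i j where ij: "j < L n (y i)" "m' = e i + int j"
      using cover[of e "\<lambda>i. L n (y i)" m', OF eg L_pos] by blast
    show "d (m'+1) = d m' + int (L m (z m')) \<and> seg x (d m') (L m (z m')) \<in> subst_pow \<theta> m (z m')"
      using dgap[OF ij(1)] Lz[OF ij(1)] segb[OF ij(1)] WSnth[OF ij(1)] zb[OF ij(1)] ij(2) by simp
  qed
  have pn: "parse n z e y"
    unfolding parse_def
  proof (intro allI conjI)
    fix i
    show "e (i+1) = e i + int (L n (y i))" by (rule eg)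
    have "seg z (e i) (L n (y i)) = U i" unfolding z_def using seg_glue[of e U, OF eg' Une] lenU by metis
    then show "seg z (e i) (L n (y i)) \<in> subst_pow \<theta> n (y i)" using F[of i] by simp
  qed
  have de: "d (e i) = c i" for i using db[of 0 i] L_pos by simp
  have zs: "seg z (e i) (L n (y i)) = U i" for i unfolding z_def using seg_glue[of e U, OF eg' Une] lenU by metis
  have ws: "\<forall>i j. j < L n (y i) \<longrightarrow> seg x (d (e i + int j)) (L m (z (e i + int j))) = WS i ! j"
    using segb Lz by simp
  show ?thesis using pm pn de zs ws by blast
qed


lemma factor_choice:
  assumes p: "parse (n+m) x c y"
  shows "\<exists>U WS. \<forall>i. U i \<in> subst_pow \<theta> n (y i) \<and> list_all2 (\<lambda>a w. w \<in> subst_pow \<theta> m a) (U i) (WS i)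
              \<and> concat (WS i) = seg x (c i) (L (n+m) (y i))"
proof -
  have "\<forall>i. \<exists>q. fst q \<in> subst_pow \<theta> n (y i) \<and> list_all2 (\<lambda>a w. w \<in> subst_pow \<theta> m a) (fst q) (snd q)
              \<and> concat (snd q) = seg x (c i) (L (n+m) (y i))"
  proof
    fix i
    have "seg x (c i) (L (n+m) (y i)) \<in> subst_pow \<theta> (n+m) (y i)" by (rule parse_blk[OF p])
    then have "seg x (c i) (L (n+m) (y i)) \<in> (\<Union>u\<in>subst_pow \<theta> n (y i). pw \<theta> m u)"
      by (simp only: subst_pow_add)
    then obtain u where u: "u \<in> subst_pow \<theta> n (y i)" "seg x (c i) (L (n+m) (y i)) \<in> pw \<theta> m u" by blast
    then obtain ws where "seg x (c i) (L (n+m) (y i)) = concat ws" "list_all2 (\<lambda>a w. w \<in> subst_pow \<theta> m a) u ws"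
      unfolding pw_def by blast
    then show "\<exists>q. fst q \<in> subst_pow \<theta> n (y i) \<and> list_all2 (\<lambda>a w. w \<in> subst_pow \<theta> m a) (fst q) (snd q)
              \<and> concat (snd q) = seg x (c i) (L (n+m) (y i))"
      using u by (intro exI[of _ "(u, ws)"]) simp
  qed
  then obtain f where "\<forall>i. fst (f i) \<in> subst_pow \<theta> n (y i) \<and> list_all2 (\<lambda>a w. w \<in> subst_pow \<theta> m a) (fst (f i)) (snd (f i))
              \<and> concat (snd (f i)) = seg x (c i) (L (n+m) (y i))"
    by (rule choice[THEN exE]) blast
  then show ?thesis by (intro exI[of _ "\<lambda>i. fst (f i)"] exI[of _ "\<lambda>i. snd (f i)"]) blast
qed

lemma parse_same_y:
  assumes "parse n x c y" "parse n x' c' y" "c 0 = c' 0"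
  shows "c = c'"
proof
  fix i
  have "c i - c' i = c 0 - c' 0"
    by (rule gap_const[of c "\<lambda>i. int (L n (y i))" c']) (use parse_gap[OF assms(1)] parse_gap[OF assms(2)] in auto)
  then show "c i = c' i" using assms(3) by simp
qed

definition Rec :: "nat \<Rightarrow> bool" where
  "Rec n \<longleftrightarrow> (\<forall>x\<in>XX. (\<exists>c y. parse n x c y \<and> y \<in> XX) \<and>
      (\<forall>c y c' y'. parse n x c y \<longrightarrow> y \<in> XX \<longrightarrow> parse n x c' y' \<longrightarrow> y' \<in> XX \<longrightarrow>
          (\<exists>t. \<forall>i. c' i = c (i+t) \<and> y' i = y (i+t))))"

lemma Rec0_uniq:
  assumes p: "parse 0 x c y" and p': "parse 0 x c' y'"
  shows "\<exists>t. \<forall>i. c' i = c (i+t) \<and> y' i = y (i+t)"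
proof -
  have g: "c (i+1) = c i + 1" "c' (i+1) = c' i + 1" for i
    using parse_gap[OF p, of i] parse_gap[OF p', of i] by (simp_all add: L0)
  have yv: "y i = x (c i)" "y' i = x (c' i)" for i
    using parse_blk[OF p, of i] parse_blk[OF p', of i] by (simp_all add: L0 seg_one)
  have cl: "c i = c 0 + i" for i
  proof -
    have "c i - i = c 0 - 0" by (rule gap_const[of c "\<lambda>_. 1" "\<lambda>i. i"]) (simp_all add: g)
    then show ?thesis by simp
  qed
  have cl': "c' i = c' 0 + i" for i
  proof -
    have "c' i - i = c' 0 - 0" by (rule gap_const[of c' "\<lambda>_. 1" "\<lambda>i. i"]) (simp_all add: g)
    then show ?thesis by simp
  qed
  show ?thesis
  proof (intro exI[of _ "c' 0 - c 0"] allI conjI)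
    fix i
    show ci: "c' i = c (i + (c' 0 - c 0))" using cl[of "i + (c' 0 - c 0)"] cl'[of i] by simp
    show "y' i = y (i + (c' 0 - c 0))" using yv(1)[of "i + (c' 0 - c 0)"] yv(2)[of i] ci by simp
  qed
qed

lemma Rec0: "Rec 0"
proof -
  have "parse 0 x (\<lambda>i. i) x" for x unfolding parse_def by (simp add: L0 seg_one)
  then show ?thesis unfolding Rec_def using Rec0_uniq by blast
qed

end

locale rrec = rsub +
  assumes rec: "recognisable \<theta>"
begin

lemma L1: "L (Suc 0) a = slen \<theta> a"
  by (simp add: L_def)

lemma yk:
  assumes p: "parse 1 x c y" and y: "y \<in> XX"
  shows "\<exists>i0. c i0 \<le> 0 \<and> (\<lambda>i. y (i+i0)) \<in> XX \<and> nat (- c i0) < slen \<theta> (y i0) \<and>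
     in_image \<theta> (\<lambda>i. y (i+i0)) (shift_back (nat (- c i0)) x)"
proof -
  obtain i0 where i0: "c i0 \<le> 0" "0 < c (i0+1)" using block_ex[of c 0, OF parse_sm[OF p]] by blast
  have g: "c (i+1) = c i + int (L 1 (y i))" for i using parse_gap[OF p] .
  have k: "nat (- c i0) < slen \<theta> (y i0)" using i0 g[of i0] L1 by simp
  have "in_image \<theta> (\<lambda>i. y (i+i0)) (shift_back (nat (- c i0)) x)"
    unfolding in_image_def
  proof (intro exI[of _ "\<lambda>i. seg x (c (i+i0)) (L 1 (y (i+i0)))"] exI[of _ "\<lambda>i. c (i+i0) - c i0"] conjI allI impI)
    fix i
    show "seg x (c (i+i0)) (L 1 (y (i+i0))) \<in> \<theta> (y (i+i0))" using parse_blk[OF p, of "i+i0"] by simp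
    show "c (i + 1 + i0) - c i0 = c (i+i0) - c i0 + int (length (seg x (c (i+i0)) (L 1 (y (i+i0)))))"
      using g[of "i+i0"] by (simp add: algebra_simps)
    fix j assume "j < length (seg x (c (i+i0)) (L 1 (y (i+i0))))"
    then show "shift_back (nat (- c i0)) x (c (i+i0) - c i0 + int j) = seg x (c (i+i0)) (L 1 (y (i+i0))) ! j"
      using i0 by (simp add: shift_back_def)
  qed simp
  then show ?thesis using i0 k Xsub_shift[OF y] by blast
qed

lemma Rec1_ex:
  assumes x: "x \<in> XX"
  shows "\<exists>c y. parse 1 x c y \<and> y \<in> XX"
proof -
  define P where "P = (\<lambda>(y, k). y \<in> XX \<and> k < slen \<theta> (y 0) \<and> in_image \<theta> y (shift_back k x))"
  have ex1: "\<exists>!q. P q" using rec x unfolding recognisable_def P_def by blast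
  then obtain q0 where q0: "P q0" by blast
  obtain y k where q0e: "q0 = (y, k)" by (cases q0)
  have yX: "y \<in> XX" and im: "in_image \<theta> y (shift_back k x)"
    using q0 unfolding q0e P_def by auto
  obtain w p where w: "\<And>i. w i \<in> \<theta> (y i)" "\<And>i. p (i + 1) = p i + int (length (w i))"
    "\<And>i j. j < length (w i) \<Longrightarrow> shift_back k x (p i + int j) = w i ! j"
    using im unfolding in_image_def by blast
  have lw: "length (w i) = L 1 (y i)" for i using len_L[of "w i" 1 "y i"] w(1) by simp
  have "parse 1 x (\<lambda>i. p i - int k) y"
    unfolding parse_def
  proof (intro allI conjI)
    fix i
    show "p (i + 1) - int k = p i - int k + int (L 1 (y i))" using w(2) lw by simp
    have "seg x (p i - int k) (L 1 (y i)) = w i"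
    proof (rule nth_equalityI)
      show "length (seg x (p i - int k) (L 1 (y i))) = length (w i)" using lw by simp
      fix j assume "j < length (seg x (p i - int k) (L 1 (y i)))"
      then have j: "j < length (w i)" using lw by simp
      have "shift_back k x (p i + int j) = x (p i - int k + int j)" by (simp add: shift_back_def algebra_simps)
      then show "seg x (p i - int k) (L 1 (y i)) ! j = w i ! j" using w(3)[OF j] j lw by simp
    qed
    then show "seg x (p i - int k) (L 1 (y i)) \<in> subst_pow \<theta> 1 (y i)" using w(1) by simp
  qed
  then show ?thesis using yX by blast
qed

lemma Rec1_uniq:
  assumes x: "x \<in> XX" and p: "parse 1 x c y" and y: "y \<in> XX"
    and p': "parse 1 x c' y'" and y': "y' \<in> XX"
  shows "\<exists>t. \<forall>i. c' i = c (i+t) \<and> y' i = y (i+t)"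
proof -
  define P where "P = (\<lambda>(y, k). y \<in> XX \<and> k < slen \<theta> (y 0) \<and> in_image \<theta> y (shift_back k x))"
  have ex1: "\<exists>!q. P q" using rec x unfolding recognisable_def P_def by blast
  obtain i0 where i0: "c i0 \<le> 0" "P ((\<lambda>i. y (i+i0)), nat (- c i0))"
    using yk[OF p y] unfolding P_def by auto
  obtain i1 where i1: "c' i1 \<le> 0" "P ((\<lambda>i. y' (i+i1)), nat (- c' i1))"
    using yk[OF p' y'] unfolding P_def by auto
  have eq: "((\<lambda>i. y (i+i0)), nat (- c i0)) = ((\<lambda>i. y' (i+i1)), nat (- c' i1))"
    using ex1 i0(2) i1(2) by (metis ex1E)
  then have yy0: "(\<lambda>i. y (i+i0)) = (\<lambda>i. y' (i+i1))" and cc0: "nat (- c i0) = nat (- c' i1)" by simp_all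
  have yy: "y (i+i0) = y' (i+i1)" for i using fun_cong[OF yy0, of i] by simp
  have cc: "c i0 = c' i1" using cc0 i0(1) i1(1) by simp
  have pa: "parse 1 x (\<lambda>i. c (i+i0)) (\<lambda>i. y (i+i0))" by (rule parse_shift_idx[OF p])
  have pb: "parse 1 x (\<lambda>i. c' (i+i1)) (\<lambda>i. y (i+i0))" using parse_shift_idx[OF p', of i1] yy0 by simp
  have ceq: "(\<lambda>i. c (i+i0)) = (\<lambda>i. c' (i+i1))" by (rule parse_same_y[OF pa pb]) (use cc in simp)
  show ?thesis
  proof (intro exI[of _ "i0 - i1"] allI conjI)
    fix i
    have "c (i - i1 + i0) = c' (i - i1 + i1)" using fun_cong[OF ceq, of "i - i1"] by simp
    then show "c' i = c (i + (i0 - i1))" by (simp add: algebra_simps)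
    have "y (i - i1 + i0) = y' (i - i1 + i1)" using yy[of "i - i1"] .
    then show "y' i = y (i + (i0 - i1))" by (simp add: algebra_simps)
  qed
qed

lemma Rec1: "Rec 1"
  unfolding Rec_def using Rec1_ex Rec1_uniq by blast

lemma Rec_Suc_ex:
  assumes R1: "Rec 1" and Rn: "Rec n" and x: "x \<in> XX"
  shows "\<exists>c y. parse (Suc n) x c y \<and> y \<in> XX"
proof -
  obtain d z where dz: "parse 1 x d z" "z \<in> XX" using R1 x unfolding Rec_def by blast
  obtain e y where ey: "parse n z e y" "y \<in> XX" using Rn dz(2) unfolding Rec_def by blast
  have "parse (n+1) x (\<lambda>i. d (e i)) y" by (rule parse_comp[OF dz(1) ey(1)])
  then show ?thesis using ey(2) by auto
qed

lemma Rec_Suc_uniq: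
  assumes R1: "Rec 1" and Rn: "Rec n"
    and x: "x \<in> XX" and p: "parse (Suc n) x c y" and y: "y \<in> XX"
    and p': "parse (Suc n) x c' y'" and y': "y' \<in> XX"
  shows "\<exists>t. \<forall>i. c' i = c (i+t) \<and> y' i = y (i+t)"
proof -
  have p1: "parse (n+1) x c y" and p1': "parse (n+1) x c' y'" using p p' by auto
  obtain U WS where F: "\<And>i. U i \<in> subst_pow \<theta> n (y i) \<and> list_all2 (\<lambda>a w. w \<in> subst_pow \<theta> 1 a) (U i) (WS i)
              \<and> concat (WS i) = seg x (c i) (L (n+1) (y i))" using factor_choice[OF p1] by blast
  obtain U' WS' where F': "\<And>i. U' i \<in> subst_pow \<theta> n (y' i) \<and> list_all2 (\<lambda>a w. w \<in> subst_pow \<theta> 1 a) (U' i) (WS' i)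
              \<and> concat (WS' i) = seg x (c' i) (L (n+1) (y' i))" using factor_choice[OF p1'] by blast
  obtain d z e where r: "parse 1 x d z" "parse n z e y" "\<forall>i. d (e i) = c i"
    using refine[OF p1 F] by blast
  obtain d' z' e' where r': "parse 1 x d' z'" "parse n z' e' y'" "\<forall>i. d' (e' i) = c' i"
    using refine[OF p1' F'] by blast
  have zX: "z \<in> XX" by (rule parse_X[OF r(2) y])
  have zX': "z' \<in> XX" by (rule parse_X[OF r'(2) y'])
  have "\<exists>s. \<forall>i. d' i = d (i+s) \<and> z' i = z (i+s)"
    using R1 x r(1) zX r'(1) zX' unfolding Rec_def by blast
  then obtain s where s: "\<And>i. d' i = d (i+s) \<and> z' i = z (i+s)" by blast
  have "z' = (\<lambda>m. z (m+s))" using s by auto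
  then have "parse n (\<lambda>m. z (m+s)) e' y'" using r'(2) by simp
  then have pz: "parse n z (\<lambda>i. e' i + s) y'" by (simp add: parse_shift_seq)
  have "\<exists>t. \<forall>i. e' i + s = e (i+t) \<and> y' i = y (i+t)"
    using Rn zX r(2) y pz y' unfolding Rec_def by blast
  then obtain t where t: "\<And>i. e' i + s = e (i+t) \<and> y' i = y (i+t)" by blast
  show ?thesis
  proof (intro exI[of _ t] allI conjI)
    fix i
    have "c' i = d' (e' i)" using r'(3) by simp
    also have "\<dots> = d (e' i + s)" using s by simp
    also have "\<dots> = c (i+t)" using t r(3) by simp
    finally show "c' i = c (i+t)" .
    show "y' i = y (i+t)" using t by simp
  qed
qed

lemma Rec_Suc:
  assumes R1: "Rec 1" and Rn: "Rec n"
  shows "Rec (Suc n)"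
  unfolding Rec_def using Rec_Suc_ex[OF R1 Rn] Rec_Suc_uniq[OF R1 Rn] by blast

lemma Rec_all: "Rec n"
proof (induction n)
  case 0 then show ?case by (rule Rec0)
next
  case (Suc n) then show ?case using Rec_Suc Rec1 by blast
qed

lemma Rec_ex: "x \<in> XX \<Longrightarrow> \<exists>c y. parse n x c y \<and> y \<in> XX"
  using Rec_all[of n] unfolding Rec_def by blast

lemma Rec_uniq: "x \<in> XX \<Longrightarrow> parse n x c y \<Longrightarrow> y \<in> XX \<Longrightarrow> parse n x c' y' \<Longrightarrow> y' \<in> XX \<Longrightarrow>
   \<exists>t. \<forall>i. c' i = c (i+t) \<and> y' i = y (i+t)"
  using Rec_all[of n] unfolding Rec_def by blast


section \<open>Shuffle maps\<close>

definition perm_fam :: "nat \<Rightarrow> ('a \<Rightarrow> 'a list \<Rightarrow> 'a list) \<Rightarrow> bool" where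
  "perm_fam n \<alpha> \<longleftrightarrow> (\<forall>a. \<alpha> a permutes subst_pow \<theta> n a)"

lemma perm_in: "perm_fam n \<alpha> \<Longrightarrow> w \<in> subst_pow \<theta> n a \<Longrightarrow> \<alpha> a w \<in> subst_pow \<theta> n a"
  unfolding perm_fam_def by (simp add: permutes_in_image)

definition img :: "nat \<Rightarrow> ('a \<Rightarrow> 'a list \<Rightarrow> 'a list) \<Rightarrow> (int \<Rightarrow> 'a) \<Rightarrow> (int \<Rightarrow> int) \<Rightarrow> (int \<Rightarrow> 'a) \<Rightarrow> int \<Rightarrow> 'a" where
  "img n \<alpha> x c y = glue c (\<lambda>i. \<alpha> (y i) (seg x (c i) (L n (y i))))"

lemma img_props:
  assumes a: "perm_fam n \<alpha>" and p: "parse n x c y"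
  shows "j < L n (y i) \<Longrightarrow> img n \<alpha> x c y (c i + int j) = \<alpha> (y i) (seg x (c i) (L n (y i))) ! j"
    and "seg (img n \<alpha> x c y) (c i) (L n (y i)) = \<alpha> (y i) (seg x (c i) (L n (y i)))"
    and "parse n (img n \<alpha> x c y) c y"
proof -
  define W where "W i = \<alpha> (y i) (seg x (c i) (L n (y i)))" for i
  have Win: "W i \<in> subst_pow \<theta> n (y i)" for i unfolding W_def by (rule perm_in[OF a parse_blk[OF p]])
  have lW: "length (W i) = L n (y i)" for i using len_L[OF Win] .
  have g: "\<And>i. c (i+1) = c i + int (length (W i))" using parse_gap[OF p] lW by simp
  have ne: "\<And>i. W i \<noteq> []" using Win sp_nonnil by blast
  show "j < L n (y i) \<Longrightarrow> img n \<alpha> x c y (c i + int j) = \<alpha> (y i) (seg x (c i) (L n (y i))) ! j"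
    unfolding img_def W_def[symmetric] using glue_nth[of c W, OF g ne] lW by simp
  have sg: "seg (img n \<alpha> x c y) (c i) (L n (y i)) = W i" for i
    unfolding img_def W_def[symmetric] using seg_glue[of c W, OF g ne] lW by metis
  then show "seg (img n \<alpha> x c y) (c i) (L n (y i)) = \<alpha> (y i) (seg x (c i) (L n (y i)))"
    unfolding W_def .
  show "parse n (img n \<alpha> x c y) c y"
    unfolding parse_def using sg Win parse_gap[OF p] by simp
qed

lemma seg_eq_blocks:
  assumes p: "parse n x c y"
    and "\<And>i. seg x1 (c i) (L n (y i)) = seg x2 (c i) (L n (y i))"
  shows "x1 = x2"
proof (rule fun_eq_blocks[of c "\<lambda>i. L n (y i)"])
  show "\<And>i. c (i + 1) = c i + int (L n (y i))" by (rule parse_gap[OF p])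
  show "\<And>i. 0 < L n (y i)" by (rule L_pos)
  fix i j assume "j < L n (y i)"
  then show "x1 (c i + int j) = x2 (c i + int j)"
    using nth_seg[of j "L n (y i)" x1 "c i"] nth_seg[of j "L n (y i)" x2 "c i"] assms(2)[of i] by simp
qed

lemma sm_char:
  assumes a: "perm_fam n \<alpha>" and x: "x \<in> XX" and p: "parse n x c y" and y: "y \<in> XX"
  shows "shuffle_map \<theta> n \<alpha> x = img n \<alpha> x c y"
proof -
  define x0 where "x0 = img n \<alpha> x c y"
  define Q where "Q x' = (\<exists>y k w p.
       y \<in> Xsub \<theta> \<and> k < slen (subst_pow \<theta> n) (y 0) \<and>
       (\<forall>i. w i \<in> subst_pow \<theta> n (y i)) \<and> p 0 = 0 \<and>
       (\<forall>i. p (i + 1) = p i + int (length (w i))) \<and>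
       (\<forall>i j. j < length (w i) \<longrightarrow> x (p i + int j - int k) = w i ! j) \<and>
       (\<forall>i j. j < length (w i) \<longrightarrow> x' (p i + int j - int k) = \<alpha> (y i) (w i) ! j))" for x'
  have sm: "shuffle_map \<theta> n \<alpha> x = (THE x'. Q x')"
    unfolding shuffle_map_def Q_def using x by simp
  have Qx0: "Q x0"
  proof -
    obtain i0 where i0: "c i0 \<le> 0" "0 < c (i0+1)" using block_ex[of c 0, OF parse_sm[OF p]] by blast
    have k: "nat (- c i0) < slen (subst_pow \<theta> n) ((\<lambda>i. y (i+i0)) 0)"
      using i0 parse_gap[OF p, of i0] by (simp add: L_def)
    have kk: "int (nat (- c i0)) = - c i0" using i0 by simp
    show ?thesis unfolding Q_def
    proof (intro exI[of _ "\<lambda>i. y (i+i0)"] exI[of _ "nat (- c i0)"]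
        exI[of _ "\<lambda>i. seg x (c (i+i0)) (L n (y (i+i0)))"] exI[of _ "\<lambda>i. c (i+i0) - c i0"] conjI allI impI)
      show "(\<lambda>i. y (i+i0)) \<in> Xsub \<theta>" by (rule Xsub_shift[OF y])
      show "nat (- c i0) < slen (subst_pow \<theta> n) ((\<lambda>i. y (i+i0)) 0)" by (rule k)
      fix i
      show "seg x (c (i+i0)) (L n (y (i+i0))) \<in> subst_pow \<theta> n (y (i+i0))" by (rule parse_blk[OF p])
      have "c (i + i0 + 1) = c (i + i0) + int (L n (y (i+i0)))" by (rule parse_gap[OF p])
      then show "c (i + 1 + i0) - c i0 = c (i+i0) - c i0 + int (length (seg x (c (i+i0)) (L n (y (i+i0)))))"
        by (simp add: algebra_simps)
      fix j assume j: "j < length (seg x (c (i+i0)) (L n (y (i+i0))))"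
      have e: "c (i+i0) - c i0 + int j - int (nat (- c i0)) = c (i+i0) + int j" using kk by simp
      show "x (c (i+i0) - c i0 + int j - int (nat (- c i0))) = seg x (c (i+i0)) (L n (y (i+i0))) ! j"
        unfolding e using j by simp
      show "x0 (c (i+i0) - c i0 + int j - int (nat (- c i0))) =
          \<alpha> (y (i+i0)) (seg x (c (i+i0)) (L n (y (i+i0)))) ! j"
        unfolding e x0_def using img_props(1)[OF a p] j by simp
    qed simp
  qed
  have uQ: "x' = x0" if "Q x'" for x'
  proof -
    obtain y' k w pp where W: "y' \<in> XX" "\<And>i. w i \<in> subst_pow \<theta> n (y' i)"
      "\<And>i. pp (i + 1) = pp i + int (length (w i))"
      "\<And>i j. j < length (w i) \<Longrightarrow> x (pp i + int j - int k) = w i ! j"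
      "\<And>i j. j < length (w i) \<Longrightarrow> x' (pp i + int j - int k) = \<alpha> (y' i) (w i) ! j"
      using \<open>Q x'\<close> unfolding Q_def by blast
    have lw: "length (w i) = L n (y' i)" for i using len_L[OF W(2)] .
    have sw: "seg x (pp i - int k) (L n (y' i)) = w i" for i
    proof (rule nth_equalityI)
      show "length (seg x (pp i - int k) (L n (y' i))) = length (w i)" using lw by simp
      fix j assume "j < length (seg x (pp i - int k) (L n (y' i)))"
      then have j: "j < length (w i)" using lw by simp
      have e: "pp i - int k + int j = pp i + int j - int k" by simp
      show "seg x (pp i - int k) (L n (y' i)) ! j = w i ! j" using W(4)[OF j] j lw by (simp add: e)
    qed
    have p': "parse n x (\<lambda>i. pp i - int k) y'"
      unfolding parse_def using sw W(2,3) lw by simp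
    obtain t where t: "\<And>i. pp i - int k = c (i+t) \<and> y' i = y (i+t)"
      using Rec_uniq[OF x p y p' W(1)] by blast
    show ?thesis
    proof (rule fun_eq_blocks[of c "\<lambda>i. L n (y i)"])
      show "\<And>i. c (i + 1) = c i + int (L n (y i))" by (rule parse_gap[OF p])
      show "\<And>i. 0 < L n (y i)" by (rule L_pos)
      fix i j assume j: "j < L n (y i)"
      define i' where "i' = i - t"
      have ci: "pp i' - int k = c i" and yi: "y' i' = y i" using t[of i'] unfolding i'_def by simp_all
      have wi: "w i' = seg x (c i) (L n (y i))" using sw[of i'] ci yi by simp
      have j': "j < length (w i')" using j lw yi by simp
      have "x' (c i + int j) = x' (pp i' + int j - int k)" using ci by (simp add: algebra_simps)
      also have "\<dots> = \<alpha> (y' i') (w i') ! j" using W(5)[OF j'] .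
      also have "\<dots> = x0 (c i + int j)" unfolding x0_def using img_props(1)[OF a p j] wi yi by simp
      finally show "x' (c i + int j) = x0 (c i + int j)" .
    qed
  qed
  have "(THE x'. Q x') = x0" by (rule the_equality[of Q, OF Qx0 uQ])
  then show ?thesis using sm x0_def by simp
qed

lemma sm_out: "x \<notin> XX \<Longrightarrow> shuffle_map \<theta> n \<alpha> x = undefined"
  unfolding shuffle_map_def by simp

lemma sm_parse:
  assumes a: "perm_fam n \<alpha>" and x: "x \<in> XX" and p: "parse n x c y" and y: "y \<in> XX"
  shows "parse n (shuffle_map \<theta> n \<alpha> x) c y"
    and "seg (shuffle_map \<theta> n \<alpha> x) (c i) (L n (y i)) = \<alpha> (y i) (seg x (c i) (L n (y i)))"
  using img_props(2,3)[OF a p] sm_char[OF assms] by simp_all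

lemma sm_X:
  assumes a: "perm_fam n \<alpha>" and x: "x \<in> XX"
  shows "shuffle_map \<theta> n \<alpha> x \<in> XX"
proof -
  obtain c y where "parse n x c y" "y \<in> XX" using Rec_ex[OF x] by blast
  then show ?thesis using sm_parse(1)[OF a x] parse_X by blast
qed

lemma sm_uniq:
  assumes a: "perm_fam n \<alpha>" and x: "x \<in> XX" and p: "parse n x c y" and y: "y \<in> XX"
    and h: "\<And>i. seg x' (c i) (L n (y i)) = \<alpha> (y i) (seg x (c i) (L n (y i)))"
  shows "shuffle_map \<theta> n \<alpha> x = x'"
  by (rule seg_eq_blocks[OF p]) (simp add: sm_parse(2)[OF assms(1-4)] h)

lemma perm_fam_comp: "perm_fam n \<alpha> \<Longrightarrow> perm_fam n \<beta> \<Longrightarrow> perm_fam n (\<lambda>a. \<beta> a \<circ> \<alpha> a)"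
  unfolding perm_fam_def by (simp add: permutes_compose)

lemma perm_fam_id: "perm_fam n (\<lambda>a. id)"
  unfolding perm_fam_def by (simp add: permutes_id)

lemma perm_fam_inv: "perm_fam n \<alpha> \<Longrightarrow> perm_fam n (\<lambda>a. inv_into UNIV (\<alpha> a))"
  unfolding perm_fam_def by (simp add: permutes_inv)

lemma sm_comp:
  assumes a: "perm_fam n \<alpha>" and b: "perm_fam n \<beta>" and x: "x \<in> XX"
  shows "shuffle_map \<theta> n \<beta> (shuffle_map \<theta> n \<alpha> x) = shuffle_map \<theta> n (\<lambda>a. \<beta> a \<circ> \<alpha> a) x"
proof -
  obtain c y where p: "parse n x c y" and y: "y \<in> XX" using Rec_ex[OF x] by blast
  have x1: "shuffle_map \<theta> n \<alpha> x \<in> XX" by (rule sm_X[OF a x])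
  have p1: "parse n (shuffle_map \<theta> n \<alpha> x) c y" by (rule sm_parse(1)[OF a x p y])
  show ?thesis
  proof (rule seg_eq_blocks[OF p])
    fix i
    show "seg (shuffle_map \<theta> n \<beta> (shuffle_map \<theta> n \<alpha> x)) (c i) (L n (y i)) =
        seg (shuffle_map \<theta> n (\<lambda>a. \<beta> a \<circ> \<alpha> a) x) (c i) (L n (y i))"
      using sm_parse(2)[OF b x1 p1 y, of i] sm_parse(2)[OF a x p y, of i]
        sm_parse(2)[OF perm_fam_comp[OF a b] x p y, of i] by simp
  qed
qed

lemma sm_id:
  assumes x: "x \<in> XX"
  shows "shuffle_map \<theta> n (\<lambda>a. id) x = x"
proof -
  obtain c y where p: "parse n x c y" and y: "y \<in> XX" using Rec_ex[OF x] by blast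
  show ?thesis by (rule sm_uniq[OF perm_fam_id x p y]) simp
qed


section \<open>Lifting to the next level\<close>

definition FACT :: "nat \<Rightarrow> 'a \<Rightarrow> 'a list \<Rightarrow> 'a list list \<Rightarrow> bool" where
  "FACT n b u ws \<longleftrightarrow> u \<in> \<theta> b \<and> list_all2 (\<lambda>a w. w \<in> subst_pow \<theta> n a) u ws"

definition UF :: "nat \<Rightarrow> 'a \<Rightarrow> bool" where
  "UF n b \<longleftrightarrow> (\<forall>u ws u' ws'. FACT n b u ws \<longrightarrow> FACT n b u' ws' \<longrightarrow> concat ws = concat ws' \<longrightarrow> u = u' \<and> ws = ws')"

definition mp :: "('a \<Rightarrow> 'a list \<Rightarrow> 'a list) \<Rightarrow> 'a list \<Rightarrow> 'a list list \<Rightarrow> 'a list list" where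
  "mp \<alpha> u ws = map (\<lambda>(a, w). \<alpha> a w) (zip u ws)"

definition lift :: "nat \<Rightarrow> ('a \<Rightarrow> 'a list \<Rightarrow> 'a list) \<Rightarrow> 'a \<Rightarrow> 'a list \<Rightarrow> 'a list" where
  "lift n \<alpha> b v = (if UF n b \<and> (\<exists>u ws. FACT n b u ws \<and> concat ws = v)
      then (let q = (SOME q. FACT n b (fst q) (snd q) \<and> concat (snd q) = v) in concat (mp \<alpha> (fst q) (snd q)))
      else v)"

lemma sp_Suc_fact: "v \<in> subst_pow \<theta> (Suc n) b \<longleftrightarrow> (\<exists>u ws. FACT n b u ws \<and> concat ws = v)"
proof -
  have "subst_pow \<theta> (Suc n) b = (\<Union>u\<in>subst_pow \<theta> 1 b. pw \<theta> n u)"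
    using subst_pow_add[of \<theta> 1 n b] by simp
  then show ?thesis unfolding FACT_def pw_def by auto
qed

lemma FACT_len: "FACT n b u ws \<Longrightarrow> length ws = length u"
  unfolding FACT_def using list_all2_lengthD by fastforce

lemma length_mp[simp]: "length (mp \<alpha> u ws) = min (length u) (length ws)"
  by (simp add: mp_def)

lemma nth_mp[simp]: "j < length u \<Longrightarrow> j < length ws \<Longrightarrow> mp \<alpha> u ws ! j = \<alpha> (u ! j) (ws ! j)"
  by (simp add: mp_def)

lemma FACT_mp: "perm_fam n \<alpha> \<Longrightarrow> FACT n b u ws \<Longrightarrow> FACT n b u (mp \<alpha> u ws)"
  unfolding FACT_def list_all2_conv_all_nth by (auto simp: perm_in)

lemma mp_comp: "length u = length ws \<Longrightarrow> mp \<alpha> u (mp \<beta> u ws) = mp (\<lambda>a. \<alpha> a \<circ> \<beta> a) u ws"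
  by (rule nth_equalityI) simp_all

lemma mp_id: "length u = length ws \<Longrightarrow> mp (\<lambda>a. id) u ws = ws"
  by (rule nth_equalityI) simp_all

lemma lift_eq:
  assumes "UF n b" "FACT n b u ws"
  shows "lift n \<alpha> b (concat ws) = concat (mp \<alpha> u ws)"
proof -
  define q where "q = (SOME q. FACT n b (fst q) (snd q) \<and> concat (snd q) = concat ws)"
  have "FACT n b (fst q) (snd q) \<and> concat (snd q) = concat ws"
    unfolding q_def by (rule someI[of _ "(u, ws)"]) (simp add: assms(2))
  then have "fst q = u \<and> snd q = ws" using assms unfolding UF_def by blast
  then show ?thesis using assms unfolding lift_def q_def[symmetric] by auto
qed

lemma lift_out: "v \<notin> subst_pow \<theta> (Suc n) b \<Longrightarrow> lift n \<alpha> b v = v"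
  unfolding lift_def sp_Suc_fact by auto

lemma lift_noUF: "\<not> UF n b \<Longrightarrow> lift n \<alpha> b v = v"
  unfolding lift_def by auto

lemma lift_comp:
  assumes a: "perm_fam n \<alpha>" and b: "perm_fam n \<beta>"
  shows "lift n (\<lambda>a. \<alpha> a \<circ> \<beta> a) b = lift n \<alpha> b \<circ> lift n \<beta> b"
proof
  fix v
  show "lift n (\<lambda>a. \<alpha> a \<circ> \<beta> a) b v = (lift n \<alpha> b \<circ> lift n \<beta> b) v"
  proof (cases "UF n b \<and> v \<in> subst_pow \<theta> (Suc n) b")
    case True
    then obtain u ws where f: "FACT n b u ws" "concat ws = v" using sp_Suc_fact by blast
    have l: "length ws = length u" by (rule FACT_len[OF f(1)])
    have f2: "FACT n b u (mp \<beta> u ws)" by (rule FACT_mp[OF b f(1)])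
    have "(lift n \<alpha> b \<circ> lift n \<beta> b) v = lift n \<alpha> b (concat (mp \<beta> u ws))"
      using lift_eq[OF _ f(1)] True f(2) by auto
    also have "\<dots> = concat (mp \<alpha> u (mp \<beta> u ws))" using lift_eq[OF _ f2] True by auto
    also have "\<dots> = concat (mp (\<lambda>a. \<alpha> a \<circ> \<beta> a) u ws)" using mp_comp l by simp
    also have "\<dots> = lift n (\<lambda>a. \<alpha> a \<circ> \<beta> a) b v" using lift_eq[OF _ f(1)] True f(2) by auto
    finally show ?thesis by simp
  next
    case False
    then show ?thesis using lift_out lift_noUF by auto
  qed
qed

lemma lift_idf: "lift n (\<lambda>a. id) b = id"
proof
  fix v
  show "lift n (\<lambda>a. id) b v = id v"
  proof (cases "UF n b \<and> v \<in> subst_pow \<theta> (Suc n) b")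
    case True
    then obtain u ws where f: "FACT n b u ws" "concat ws = v" using sp_Suc_fact by blast
    then show ?thesis using lift_eq[OF _ f(1)] True mp_id[OF FACT_len[OF f(1), symmetric]] by auto
  next
    case False
    then show ?thesis using lift_out lift_noUF by auto
  qed
qed

lemma lift_in:
  assumes a: "perm_fam n \<alpha>" and v: "v \<in> subst_pow \<theta> (Suc n) b"
  shows "lift n \<alpha> b v \<in> subst_pow \<theta> (Suc n) b"
proof (cases "UF n b")
  case True
  obtain u ws where f: "FACT n b u ws" "concat ws = v" using v sp_Suc_fact by blast
  have "lift n \<alpha> b v = concat (mp \<alpha> u ws)" using lift_eq[OF True f(1)] f(2) by simp
  then show ?thesis using FACT_mp[OF a f(1)] sp_Suc_fact by auto
next
  case False then show ?thesis using v lift_noUF by simp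
qed

lemma lift_perm:
  assumes a: "perm_fam n \<alpha>"
  shows "lift n \<alpha> b permutes subst_pow \<theta> (Suc n) b"
proof -
  define \<alpha>' where "\<alpha>' = (\<lambda>a. inv_into UNIV (\<alpha> a))"
  have a': "perm_fam n \<alpha>'" unfolding \<alpha>'_def by (rule perm_fam_inv[OF a])
  have c1: "(\<lambda>a. \<alpha> a \<circ> \<alpha>' a) = (\<lambda>a. id)"
  proof
    fix a
    have "\<alpha> a permutes subst_pow \<theta> n a" using a by (simp add: perm_fam_def)
    from permutes_inv_o(1)[OF this] show "\<alpha> a \<circ> \<alpha>' a = id" unfolding \<alpha>'_def by simp
  qed
  have c2: "(\<lambda>a. \<alpha>' a \<circ> \<alpha> a) = (\<lambda>a. id)"
  proof
    fix a
    have "\<alpha> a permutes subst_pow \<theta> n a" using a by (simp add: perm_fam_def)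
    from permutes_inv_o(2)[OF this] show "\<alpha>' a \<circ> \<alpha> a = id" unfolding \<alpha>'_def by simp
  qed
  have i1: "lift n \<alpha> b \<circ> lift n \<alpha>' b = id" using lift_comp[OF a a', of b] c1 lift_idf by simp
  have i2: "lift n \<alpha>' b \<circ> lift n \<alpha> b = id" using lift_comp[OF a' a, of b] c2 lift_idf by simp
  show ?thesis
  proof (rule bij_imp_permutes)
    show "bij_betw (lift n \<alpha> b) (subst_pow \<theta> (Suc n) b) (subst_pow \<theta> (Suc n) b)"
    proof (rule bij_betw_byWitness[where f' = "lift n \<alpha>' b"])
      show "\<forall>v\<in>subst_pow \<theta> (Suc n) b. lift n \<alpha>' b (lift n \<alpha> b v) = v" using i2 by (auto dest: fun_cong)
      show "\<forall>v\<in>subst_pow \<theta> (Suc n) b. lift n \<alpha> b (lift n \<alpha>' b v) = v" using i1 by (auto dest: fun_cong)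
      show "lift n \<alpha> b ` subst_pow \<theta> (Suc n) b \<subseteq> subst_pow \<theta> (Suc n) b" using lift_in[OF a] by auto
      show "lift n \<alpha>' b ` subst_pow \<theta> (Suc n) b \<subseteq> subst_pow \<theta> (Suc n) b" using lift_in[OF a'] by auto
    qed
    show "\<And>v. v \<notin> subst_pow \<theta> (Suc n) b \<Longrightarrow> lift n \<alpha> b v = v" by (rule lift_out)
  qed
qed


lemma UF_occ:
  assumes x: "x \<in> XX" and p: "parse (Suc n) x c y" and y: "y \<in> XX"
  shows "UF n (y i)"
  unfolding UF_def
proof (intro allI impI)
  fix u ws u' ws'
  assume f: "FACT n (y i) u ws" and f': "FACT n (y i) u' ws'" and cc: "concat ws = concat ws'"
  define v where "v = concat ws"
  have vin: "v \<in> subst_pow \<theta> (Suc n) (y i)" using f sp_Suc_fact unfolding v_def by blast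
  define V where "V i' = (if i' = i then v else seg x (c i') (L (Suc n) (y i')))" for i'
  have Vin: "V i' \<in> subst_pow \<theta> (Suc n) (y i')" for i'
    unfolding V_def using vin parse_blk[OF p] by simp
  have lV: "length (V i') = L (Suc n) (y i')" for i' using len_L[OF Vin] .
  define x2 where "x2 = glue c V"
  have g: "\<And>i'. c (i'+1) = c i' + int (length (V i'))" using parse_gap[OF p] lV by simp
  have ne: "\<And>i'. V i' \<noteq> []" using Vin sp_nonnil by blast
  have sx2: "seg x2 (c i') (L (Suc n) (y i')) = V i'" for i'
    unfolding x2_def using seg_glue[of c V, OF g ne] lV by metis
  have p2: "parse (Suc n) x2 c y" unfolding parse_def using sx2 Vin parse_gap[OF p] by simp
  have x2X: "x2 \<in> XX" by (rule parse_X[OF p2 y])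
  have p3: "parse (1+n) x2 c y" using p2 by simp
  obtain U0 WS0 where F0: "\<And>i. U0 i \<in> subst_pow \<theta> 1 (y i) \<and> list_all2 (\<lambda>a w. w \<in> subst_pow \<theta> n a) (U0 i) (WS0 i)
              \<and> concat (WS0 i) = seg x2 (c i) (L (1+n) (y i))" using factor_choice[OF p3] by blast
  have Fgen: "\<And>i'. (U0(i := uu)) i' \<in> subst_pow \<theta> 1 (y i') \<and>
      list_all2 (\<lambda>a w. w \<in> subst_pow \<theta> n a) ((U0(i := uu)) i') ((WS0(i := ww)) i')
      \<and> concat ((WS0(i := ww)) i') = seg x2 (c i') (L (1+n) (y i'))"
    if "FACT n (y i) uu ww" "concat ww = v" for uu ww
    using that F0 sx2[of i] unfolding FACT_def V_def by auto
  obtain d1 z1 e1 where r1: "parse n x2 d1 z1" "parse 1 z1 e1 y" "\<forall>i. d1 (e1 i) = c i"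
     "\<forall>i'. seg z1 (e1 i') (L 1 (y i')) = (U0(i := u)) i'"
     "\<forall>i' j. j < L 1 (y i') \<longrightarrow> seg x2 (d1 (e1 i' + int j)) (L n (z1 (e1 i' + int j))) = (WS0(i := ws)) i' ! j"
    using refine[OF p3 Fgen[OF f v_def[symmetric]]] by blast
  obtain d2 z2 e2 where r2: "parse n x2 d2 z2" "parse 1 z2 e2 y" "\<forall>i. d2 (e2 i) = c i"
     "\<forall>i'. seg z2 (e2 i') (L 1 (y i')) = (U0(i := u')) i'"
     "\<forall>i' j. j < L 1 (y i') \<longrightarrow> seg x2 (d2 (e2 i' + int j)) (L n (z2 (e2 i' + int j))) = (WS0(i := ws')) i' ! j"
    using refine[OF p3 Fgen[OF f' cc[folded v_def, symmetric]]] by blast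
  have z1X: "z1 \<in> XX" by (rule parse_X[OF r1(2) y])
  have z2X: "z2 \<in> XX" by (rule parse_X[OF r2(2) y])
  obtain t where t: "\<And>k. d2 k = d1 (k+t) \<and> z2 k = z1 (k+t)"
    using Rec_uniq[OF x2X r1(1) z1X r2(1) z2X] by blast
  have "d1 (e1 i) = d1 (e2 i + t)" using r1(3) r2(3) t by metis
  then have et: "e1 i = e2 i + t" using cut_inj[of d1, OF parse_sm[OF r1(1)]] by blast
  have "u' = seg z2 (e2 i) (L 1 (y i))" using r2(4) by simp
  also have "\<dots> = seg (\<lambda>m. z1 (m+t)) (e2 i) (L 1 (y i))" using t by metis
  also have "\<dots> = seg z1 (e1 i) (L 1 (y i))" by (simp add: seg_shift et)
  also have "\<dots> = u" using r1(4) by simp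
  finally have uu: "u' = u" .
  have lws: "length ws = L 1 (y i)" "length ws' = L 1 (y i)"
    using FACT_len[OF f] FACT_len[OF f'] f f' len_L[of u 1 "y i"] len_L[of u' 1 "y i"]
    unfolding FACT_def by auto
  have "ws = ws'"
  proof (rule nth_equalityI)
    show "length ws = length ws'" using lws by simp
    fix j assume "j < length ws"
    then have j: "j < L 1 (y i)" using lws by simp
    have "ws' ! j = seg x2 (d2 (e2 i + int j)) (L n (z2 (e2 i + int j)))" using r2(5) j by simp
    also have "\<dots> = seg x2 (d1 (e2 i + int j + t)) (L n (z1 (e2 i + int j + t)))" using t by simp
    also have "e2 i + int j + t = e1 i + int j" using et by simp
    also have "seg x2 (d1 (e1 i + int j)) (L n (z1 (e1 i + int j))) = ws ! j" using r1(5) j by simp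
    finally show "ws ! j = ws' ! j" by simp
  qed
  then show "u = u' \<and> ws = ws'" using uu by simp
qed

lemma sm_lift:
  assumes a: "perm_fam n \<alpha>"
  shows "shuffle_map \<theta> n \<alpha> = shuffle_map \<theta> (Suc n) (lift n \<alpha>)"
proof
  fix x
  have b: "perm_fam (Suc n) (lift n \<alpha>)" unfolding perm_fam_def using lift_perm[OF a] by blast
  show "shuffle_map \<theta> n \<alpha> x = shuffle_map \<theta> (Suc n) (lift n \<alpha>) x"
  proof (cases "x \<in> XX")
    case False then show ?thesis by (simp add: sm_out)
  next
    case x: True
    obtain c y where p: "parse (Suc n) x c y" and y: "y \<in> XX" using Rec_ex[OF x] by blast
    have p1: "parse (1+n) x c y" using p by simp
    obtain U WS where F: "\<And>i. U i \<in> subst_pow \<theta> 1 (y i) \<and> list_all2 (\<lambda>a w. w \<in> subst_pow \<theta> n a) (U i) (WS i)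
              \<and> concat (WS i) = seg x (c i) (L (1+n) (y i))" using factor_choice[OF p1] by blast
    obtain d z e where r: "parse n x d z" "parse 1 z e y" "\<forall>i. d (e i) = c i"
       "\<forall>i. seg z (e i) (L 1 (y i)) = U i"
       "\<forall>i j. j < L 1 (y i) \<longrightarrow> seg x (d (e i + int j)) (L n (z (e i + int j))) = WS i ! j"
      using refine[OF p1 F] by blast
    have zX: "z \<in> XX" by (rule parse_X[OF r(2) y])
    define x' where "x' = shuffle_map \<theta> (Suc n) (lift n \<alpha>) x"
    have fact: "FACT n (y i) (U i) (WS i)" for i using F[of i] unfolding FACT_def by simp
    have lU: "length (U i) = L 1 (y i)" for i using F[of i] len_L by blast
    have lWS: "length (WS i) = L 1 (y i)" for i using FACT_len[OF fact] lU by simp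
    have Unth: "j < L 1 (y i) \<Longrightarrow> U i ! j = z (e i + int j)" for i j
      using r(4) nth_seg[of j "L 1 (y i)" z "e i"] by metis
    have blocks: "seg x' (d (e i + int j)) (L n (z (e i + int j))) = \<alpha> (z (e i + int j)) (WS i ! j)"
      if j: "j < L 1 (y i)" for i j
    proof -
      have sx': "seg x' (c i) (L (Suc n) (y i)) = lift n \<alpha> (y i) (seg x (c i) (L (Suc n) (y i)))"
        unfolding x'_def by (rule sm_parse(2)[OF b x p y])
      also have "seg x (c i) (L (Suc n) (y i)) = concat (WS i)" using F[of i] by simp
      also have "lift n \<alpha> (y i) (concat (WS i)) = concat (mp \<alpha> (U i) (WS i))"
        by (rule lift_eq[OF UF_occ[OF x p y] fact])
      finally have A: "seg x' (c i) (L (Suc n) (y i)) = concat (mp \<alpha> (U i) (WS i))" .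
      note tl = telescope[of d "\<lambda>k. L n (z k)", OF parse_gap[OF r(1)], of "e i" "L 1 (y i)" x']
      define Sg where "Sg = (\<Sum>j<L 1 (y i). L n (z (e i + int j)))"
      have "e i + int (L 1 (y i)) = e (i+1)" using parse_gap[OF r(2)] by simp
      then have "d (e i) + int Sg = c (i+1)" using tl r(3) unfolding Sg_def by metis
      then have "int Sg = int (L (Suc n) (y i))"
        using parse_gap[OF p, of i] r(3) by simp
      then have Sg: "Sg = L (Suc n) (y i)" by simp
      note tl = tl[folded Sg_def]
      have B: "concat (map (\<lambda>j. seg x' (d (e i + int j)) (L n (z (e i + int j)))) [0..<L 1 (y i)])
          = concat (mp \<alpha> (U i) (WS i))" using tl Sg A r(3) by simp
      have C: "map (\<lambda>j. seg x' (d (e i + int j)) (L n (z (e i + int j)))) [0..<L 1 (y i)] = mp \<alpha> (U i) (WS i)"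
      proof (rule concat_eq_pointwise)
        show "length (map (\<lambda>j. seg x' (d (e i + int j)) (L n (z (e i + int j)))) [0..<L 1 (y i)]) = length (mp \<alpha> (U i) (WS i))"
          using lU lWS by simp
        show "\<forall>j<length (map (\<lambda>j. seg x' (d (e i + int j)) (L n (z (e i + int j)))) [0..<L 1 (y i)]).
            length (map (\<lambda>j. seg x' (d (e i + int j)) (L n (z (e i + int j)))) [0..<L 1 (y i)] ! j) = length (mp \<alpha> (U i) (WS i) ! j)"
        proof (intro allI impI)
          fix j assume "j < length (map (\<lambda>j. seg x' (d (e i + int j)) (L n (z (e i + int j)))) [0..<L 1 (y i)])"
          then have j: "j < L 1 (y i)" by simp
          have w: "WS i ! j \<in> subst_pow \<theta> n (U i ! j)" using F[of i] j lU by (simp add: list_all2_conv_all_nth)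
          have "length (\<alpha> (U i ! j) (WS i ! j)) = L n (U i ! j)" using len_L[OF perm_in[OF a w]] .
          then show "length (map (\<lambda>j. seg x' (d (e i + int j)) (L n (z (e i + int j)))) [0..<L 1 (y i)] ! j) = length (mp \<alpha> (U i) (WS i) ! j)"
            using j lU lWS Unth[OF j] by simp
        qed
        show "concat (map (\<lambda>j. seg x' (d (e i + int j)) (L n (z (e i + int j)))) [0..<L 1 (y i)]) = concat (mp \<alpha> (U i) (WS i))"
          by (rule B)
      qed
      have "seg x' (d (e i + int j)) (L n (z (e i + int j))) = mp \<alpha> (U i) (WS i) ! j"
        using arg_cong[OF C, of "\<lambda>l. l ! j"] j by simp
      also have "\<dots> = \<alpha> (z (e i + int j)) (WS i ! j)" using j lU lWS Unth[OF j] by simp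
      finally show ?thesis .
    qed
    have "shuffle_map \<theta> n \<alpha> x = x'"
    proof (rule sm_uniq[OF a x r(1) zX])
      fix k
      obtain i j where ij: "j < L 1 (y i)" "k = e i + int j"
        using cover[of e "\<lambda>i. L 1 (y i)" k, OF parse_gap[OF r(2)] L_pos] by blast
      show "seg x' (d k) (L n (z k)) = \<alpha> (z k) (seg x (d k) (L n (z k)))"
        using blocks[OF ij(1)] r(5) ij by simp
    qed
    then show ?thesis unfolding x'_def .
  qed
qed


section \<open>Parity of lifted permutations\<close>

lemma cube_T:
  assumes "x \<noteq> y" "y \<noteq> z"
  shows "(Transposition.transpose x y \<circ> Transposition.transpose y z) \<circ>
         (Transposition.transpose x y \<circ> Transposition.transpose y z) \<circ>
         (Transposition.transpose x y \<circ> Transposition.transpose y z) = id"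
  using assms by (intro ext) (simp add: Transposition.transpose_def)

lemma even_cube:
  assumes "permutation f" "f \<circ> f \<circ> f = id"
  shows "evenperm f"
proof -
  have A: "evenperm (f \<circ> f \<circ> f) = (evenperm (f \<circ> f) = evenperm f)"
    by (rule evenperm_comp) (simp_all add: permutation_compose assms(1))
  have B: "evenperm (f \<circ> f)" using evenperm_comp[OF assms(1) assms(1)] by blast
  have C: "evenperm (f \<circ> f \<circ> f)" unfolding assms(2) evenperm_id by (rule TrueI)
  show ?thesis using A B C by blast
qed

definition sgl :: "'a \<Rightarrow> ('a list \<Rightarrow> 'a list) \<Rightarrow> 'a \<Rightarrow> 'a list \<Rightarrow> 'a list" where
  "sgl a p = (\<lambda>b. if b = a then p else id)"

lemma perm_fam_sgl: "p permutes subst_pow \<theta> n a \<Longrightarrow> perm_fam n (sgl a p)"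
  unfolding perm_fam_def sgl_def by (auto simp: permutes_id)

lemma sgl_comp: "sgl a (p \<circ> q) = (\<lambda>b. sgl a p b \<circ> sgl a q b)"
  unfolding sgl_def by auto

lemma sgl_id: "sgl a id = (\<lambda>b. id)"
  unfolding sgl_def by auto

lemma lift_permutation: "perm_fam n \<alpha> \<Longrightarrow> permutation (lift n \<alpha> b)"
  using lift_perm sp_fin permutation_permutes by blast

context
  fixes n :: nat and a b :: 'a
begin

abbreviation Ls where "Ls p \<equiv> lift n (sgl a p) b"

lemma Ls_comp: "p permutes subst_pow \<theta> n a \<Longrightarrow> q permutes subst_pow \<theta> n a \<Longrightarrow> Ls (p \<circ> q) = Ls p \<circ> Ls q"
  unfolding sgl_comp by (rule lift_comp[OF perm_fam_sgl perm_fam_sgl])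

lemma Ls_id: "Ls id = id"
  unfolding sgl_id by (rule lift_idf)

lemma Ls_permutation: "p permutes subst_pow \<theta> n a \<Longrightarrow> permutation (Ls p)"
  by (rule lift_permutation[OF perm_fam_sgl])

lemma even_T:
  assumes "x \<in> subst_pow \<theta> n a" "y \<in> subst_pow \<theta> n a" "z \<in> subst_pow \<theta> n a" "x \<noteq> y" "y \<noteq> z"
  shows "evenperm (Ls (Transposition.transpose x y \<circ> Transposition.transpose y z))"
proof -
  define T where "T = Transposition.transpose x y \<circ> Transposition.transpose y z"
  have Tp: "T permutes subst_pow \<theta> n a" unfolding T_def using assms
    by (intro permutes_compose permutes_swap_id)
  have "Ls T \<circ> Ls T \<circ> Ls T = Ls (T \<circ> T \<circ> T)"
    using Ls_comp Tp permutes_compose by metis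
  also have "T \<circ> T \<circ> T = id" unfolding T_def by (rule cube_T[OF assms(4,5)])
  also have "Ls id = id" by (rule Ls_id)
  finally have "Ls T \<circ> Ls T \<circ> Ls T = id" .
  then show ?thesis unfolding T_def[symmetric] by (intro even_cube Ls_permutation Tp)
qed

lemma even_2swap:
  assumes S: "x1 \<in> subst_pow \<theta> n a" "y1 \<in> subst_pow \<theta> n a" "x2 \<in> subst_pow \<theta> n a" "y2 \<in> subst_pow \<theta> n a"
    and d: "x1 \<noteq> y1" "x2 \<noteq> y2"
  shows "evenperm (Ls (Transposition.transpose x1 y1 \<circ> Transposition.transpose x2 y2))"
proof (cases "y1 = x2")
  case True then show ?thesis using even_T[OF S(1,2,4)] d by simp
next
  case False
  have e: "Transposition.transpose x1 y1 \<circ> Transposition.transpose x2 y2 =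
    (Transposition.transpose x1 y1 \<circ> Transposition.transpose y1 x2) \<circ> (Transposition.transpose y1 x2 \<circ> Transposition.transpose x2 y2)"
    by (simp add: comp_assoc[symmetric]) (simp add: comp_assoc transpose_comp_involutory)
  have p1: "Transposition.transpose x1 y1 \<circ> Transposition.transpose y1 x2 permutes subst_pow \<theta> n a"
    using S by (intro permutes_compose permutes_swap_id)
  have p2: "Transposition.transpose y1 x2 \<circ> Transposition.transpose x2 y2 permutes subst_pow \<theta> n a"
    using S by (intro permutes_compose permutes_swap_id)
  have "evenperm (Ls (Transposition.transpose x1 y1 \<circ> Transposition.transpose y1 x2) \<circ>
      Ls (Transposition.transpose y1 x2 \<circ> Transposition.transpose x2 y2))"
    using evenperm_comp[OF Ls_permutation[OF p1] Ls_permutation[OF p2]]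
      even_T[OF S(1,2,3) d(1) False] even_T[OF S(2,3,4) False d(2)] by simp
  then show ?thesis unfolding e Ls_comp[OF p1 p2] .
qed

lemma swap_const:
  assumes S: "x1 \<in> subst_pow \<theta> n a" "y1 \<in> subst_pow \<theta> n a" "x2 \<in> subst_pow \<theta> n a" "y2 \<in> subst_pow \<theta> n a"
    and d: "x1 \<noteq> y1" "x2 \<noteq> y2"
  shows "evenperm (Ls (Transposition.transpose x1 y1)) = evenperm (Ls (Transposition.transpose x2 y2))"
proof -
  have p1: "Transposition.transpose x1 y1 permutes subst_pow \<theta> n a" using S by (intro permutes_swap_id)
  have p2: "Transposition.transpose x2 y2 permutes subst_pow \<theta> n a" using S by (intro permutes_swap_id)
  have "evenperm (Ls (Transposition.transpose x1 y1) \<circ> Ls (Transposition.transpose x2 y2))"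
    using even_2swap[OF S d] Ls_comp[OF p1 p2] by simp
  then show ?thesis using evenperm_comp[OF Ls_permutation[OF p1] Ls_permutation[OF p2]] by simp
qed

lemma sgl_even:
  assumes p: "p permutes subst_pow \<theta> n a" and ev: "evenperm p"
  shows "evenperm (Ls p)"
proof -
  define E where "E = (\<forall>x1 y1. x1 \<in> subst_pow \<theta> n a \<longrightarrow> y1 \<in> subst_pow \<theta> n a \<longrightarrow> x1 \<noteq> y1 \<longrightarrow>
      evenperm (Ls (Transposition.transpose x1 y1)))"
  have Eeq: "evenperm (Ls (Transposition.transpose x1 y1)) = E"
    if "x1 \<in> subst_pow \<theta> n a" "y1 \<in> subst_pow \<theta> n a" "x1 \<noteq> y1" for x1 y1
    unfolding E_def using swap_const[OF that(1,2) _ _ that(3)] that by blast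
  have "evenperm (Ls p) = (evenperm p \<or> E)"
  proof (rule permutes_induct[OF p sp_fin])
    show "evenperm (Ls id) = (evenperm id \<or> E)" by (simp add: Ls_id evenperm_id)
  next
    fix x1 y1 q
    assume h: "x1 \<in> subst_pow \<theta> n a" "y1 \<in> subst_pow \<theta> n a" "x1 \<noteq> y1"
      "evenperm (Ls q) = (evenperm q \<or> E)" "q permutes subst_pow \<theta> n a"
    have t: "Transposition.transpose x1 y1 permutes subst_pow \<theta> n a" using h by (intro permutes_swap_id)
    have S1: "evenperm (Ls (Transposition.transpose x1 y1 \<circ> q)) =
        (evenperm (Ls (Transposition.transpose x1 y1)) = evenperm (Ls q))"
      unfolding Ls_comp[OF t h(5)] by (rule evenperm_comp[OF Ls_permutation[OF t] Ls_permutation[OF h(5)]])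
    have S2: "evenperm (Ls (Transposition.transpose x1 y1)) = E" by (rule Eeq[OF h(1-3)])
    have pq: "permutation q" using h(5) sp_fin permutation_permutes by blast
    have S3: "evenperm (Transposition.transpose x1 y1 \<circ> q) = (\<not> evenperm q)"
      using evenperm_comp[OF permutation_swap_id pq, of x1 y1] h(3) evenperm_swap[of x1 y1] by blast
    show "evenperm (Ls (Transposition.transpose x1 y1 \<circ> q)) = (evenperm (Transposition.transpose x1 y1 \<circ> q) \<or> E)"
      using S1 S2 S3 h(4) by blast
  qed
  then show ?thesis using ev by simp
qed

end

lemma lift_even:
  assumes fin: "finite (UNIV :: 'a set)" and a: "perm_fam n \<alpha>" and ev: "\<And>a. evenperm (\<alpha> a)"
  shows "evenperm (lift n \<alpha> b)"
proof -
  define fam where "fam T = (\<lambda>b. if b \<in> T then \<alpha> b else id)" for T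
  have pf: "perm_fam n (fam T)" for T using a unfolding perm_fam_def fam_def by (auto simp: permutes_id)
  have "evenperm (lift n (fam T) b)" if "finite T" for T
    using that
  proof (induction T rule: finite_induct)
    case empty
    have "fam {} = (\<lambda>b. id)" unfolding fam_def by auto
    then have "lift n (fam {}) b = lift n (\<lambda>b. id) b" by (simp only:)
    also have "\<dots> = id" by (rule lift_idf)
    finally show ?case by (simp add: evenperm_id)
  next
    case (insert a0 T)
    have e: "fam (insert a0 T) = (\<lambda>b. sgl a0 (\<alpha> a0) b \<circ> fam T b)"
      using insert(2) unfolding fam_def sgl_def by (auto intro!: ext)
    have p0: "\<alpha> a0 permutes subst_pow \<theta> n a0" using a unfolding perm_fam_def by blast
    have "lift n (fam (insert a0 T)) b = lift n (sgl a0 (\<alpha> a0)) b \<circ> lift n (fam T) b"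
      unfolding e by (rule lift_comp[OF perm_fam_sgl[OF p0] pf])
    then have "evenperm (lift n (fam (insert a0 T)) b) = (evenperm (lift n (sgl a0 (\<alpha> a0)) b) = evenperm (lift n (fam T) b))"
      using evenperm_comp[OF lift_permutation[OF perm_fam_sgl[OF p0]] lift_permutation[OF pf]] by (simp only:)
    then show ?case
      using sgl_even[OF p0 ev] insert(3) by blast
  qed
  moreover have "fam UNIV = \<alpha>" unfolding fam_def by auto
  ultimately show ?thesis using fin by metis
qed


section \<open>Group structure\<close>

abbreviation BG where "BG \<equiv> BijGroup XX"
abbreviation GG where "GG \<equiv> Gamma_group \<theta>"

definition inv_fam :: "('a \<Rightarrow> 'a list \<Rightarrow> 'a list) \<Rightarrow> 'a \<Rightarrow> 'a list \<Rightarrow> 'a list" where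
  "inv_fam \<alpha> = (\<lambda>a. inv_into UNIV (\<alpha> a))"

lemma inv_fam_perm: "perm_fam n \<alpha> \<Longrightarrow> perm_fam n (inv_fam \<alpha>)"
  unfolding inv_fam_def by (rule perm_fam_inv)

lemma inv_fam_comp:
  assumes "perm_fam n \<alpha>"
  shows "(\<lambda>a. inv_fam \<alpha> a \<circ> \<alpha> a) = (\<lambda>a. id)" and "(\<lambda>a. \<alpha> a \<circ> inv_fam \<alpha> a) = (\<lambda>a. id)"
proof -
  show "(\<lambda>a. inv_fam \<alpha> a \<circ> \<alpha> a) = (\<lambda>a. id)"
  proof
    fix a
    have "\<alpha> a permutes subst_pow \<theta> n a" using assms by (simp add: perm_fam_def)
    from permutes_inv_o(2)[OF this] show "inv_fam \<alpha> a \<circ> \<alpha> a = id" unfolding inv_fam_def by simp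
  qed
  show "(\<lambda>a. \<alpha> a \<circ> inv_fam \<alpha> a) = (\<lambda>a. id)"
  proof
    fix a
    have "\<alpha> a permutes subst_pow \<theta> n a" using assms by (simp add: perm_fam_def)
    from permutes_inv_o(1)[OF this] show "\<alpha> a \<circ> inv_fam \<alpha> a = id" unfolding inv_fam_def by simp
  qed
qed

lemma sm_ext: "shuffle_map \<theta> n \<alpha> \<in> extensional XX"
  unfolding shuffle_map_def by simp

lemma sm_Bij:
  assumes a: "perm_fam n \<alpha>"
  shows "shuffle_map \<theta> n \<alpha> \<in> Bij XX"
proof -
  have a': "perm_fam n (inv_fam \<alpha>)" by (rule inv_fam_perm[OF a])
  have "bij_betw (shuffle_map \<theta> n \<alpha>) XX XX"
  proof (rule bij_betw_byWitness[where f' = "shuffle_map \<theta> n (inv_fam \<alpha>)"])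
    show "\<forall>x\<in>XX. shuffle_map \<theta> n (inv_fam \<alpha>) (shuffle_map \<theta> n \<alpha> x) = x"
      using sm_comp[OF a a'] inv_fam_comp(1)[OF a] sm_id by simp
    show "\<forall>x\<in>XX. shuffle_map \<theta> n \<alpha> (shuffle_map \<theta> n (inv_fam \<alpha>) x) = x"
      using sm_comp[OF a' a] inv_fam_comp(2)[OF a] sm_id by simp
    show "shuffle_map \<theta> n \<alpha> ` XX \<subseteq> XX" using sm_X[OF a] by auto
    show "shuffle_map \<theta> n (inv_fam \<alpha>) ` XX \<subseteq> XX" using sm_X[OF a'] by auto
  qed
  then show ?thesis unfolding Bij_def using sm_ext by simp
qed

lemma sm_mult:
  assumes a: "perm_fam n \<alpha>" and b: "perm_fam n \<beta>"
  shows "shuffle_map \<theta> n \<beta> \<otimes>\<^bsub>BG\<^esub> shuffle_map \<theta> n \<alpha> = shuffle_map \<theta> n (\<lambda>a. \<beta> a \<circ> \<alpha> a)"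
proof -
  have "shuffle_map \<theta> n \<beta> \<otimes>\<^bsub>BG\<^esub> shuffle_map \<theta> n \<alpha> = compose XX (shuffle_map \<theta> n \<beta>) (shuffle_map \<theta> n \<alpha>)"
    unfolding BijGroup_def using sm_Bij[OF a] sm_Bij[OF b] by simp
  also have "\<dots> = shuffle_map \<theta> n (\<lambda>a. \<beta> a \<circ> \<alpha> a)"
  proof
    fix x show "compose XX (shuffle_map \<theta> n \<beta>) (shuffle_map \<theta> n \<alpha>) x = shuffle_map \<theta> n (\<lambda>a. \<beta> a \<circ> \<alpha> a) x"
      using sm_comp[OF a b, of x] sm_out[of x] by (cases "x \<in> XX") (simp_all add: compose_def)
  qed
  finally show ?thesis .
qed

lemma sm_one: "\<one>\<^bsub>BG\<^esub> = shuffle_map \<theta> n (\<lambda>a. id)"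
proof
  fix x show "\<one>\<^bsub>BG\<^esub> x = shuffle_map \<theta> n (\<lambda>a. id) x"
    using sm_id[of x n] sm_out[of x n] unfolding BijGroup_def by (cases "x \<in> XX") simp_all
qed

lemma sm_inv_BG:
  assumes a: "perm_fam n \<alpha>"
  shows "inv\<^bsub>BG\<^esub> (shuffle_map \<theta> n \<alpha>) = shuffle_map \<theta> n (inv_fam \<alpha>)"
proof (rule group.inv_equality[OF group_BijGroup])
  show "shuffle_map \<theta> n (inv_fam \<alpha>) \<otimes>\<^bsub>BG\<^esub> shuffle_map \<theta> n \<alpha> = \<one>\<^bsub>BG\<^esub>"
    using sm_mult[OF a inv_fam_perm[OF a]] inv_fam_comp(1)[OF a] sm_one[of n] by simp
  show "shuffle_map \<theta> n \<alpha> \<in> carrier BG" using sm_Bij[OF a] by (simp add: BijGroup_def)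
  show "shuffle_map \<theta> n (inv_fam \<alpha>) \<in> carrier BG" using sm_Bij[OF inv_fam_perm[OF a]] by (simp add: BijGroup_def)
qed

lemma Gamma_n_iff: "f \<in> Gamma_n \<theta> n \<longleftrightarrow> (\<exists>\<alpha>. perm_fam n \<alpha> \<and> f = shuffle_map \<theta> n \<alpha>)"
  unfolding Gamma_n_def perm_fam_def by blast

lemma A_n_iff: "f \<in> A_n \<theta> n \<longleftrightarrow> (\<exists>\<alpha>. perm_fam n \<alpha> \<and> (\<forall>a. evenperm (\<alpha> a)) \<and> f = shuffle_map \<theta> n \<alpha>)"
  unfolding A_n_def perm_fam_def by blast

lemma Gamma_n_mono1: "Gamma_n \<theta> n \<subseteq> Gamma_n \<theta> (Suc n)"
proof
  fix f assume "f \<in> Gamma_n \<theta> n"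
  then obtain \<alpha> where a: "perm_fam n \<alpha>" "f = shuffle_map \<theta> n \<alpha>" unfolding Gamma_n_iff by blast
  have "perm_fam (Suc n) (lift n \<alpha>)" unfolding perm_fam_def using lift_perm[OF a(1)] by blast
  then show "f \<in> Gamma_n \<theta> (Suc n)" unfolding Gamma_n_iff using sm_lift[OF a(1)] a(2) by blast
qed

lemma Gamma_n_mono: "m \<le> n \<Longrightarrow> Gamma_n \<theta> m \<subseteq> Gamma_n \<theta> n"
  by (rule lift_Suc_mono_le[of "Gamma_n \<theta>"]) (rule Gamma_n_mono1)

lemma A_n_Gamma_n: "A_n \<theta> n \<subseteq> Gamma_n \<theta> n"
  using A_n_iff Gamma_n_iff by blast

lemma Gamma_n_Bij: "Gamma_n \<theta> n \<subseteq> Bij XX"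
proof
  fix f assume "f \<in> Gamma_n \<theta> n"
  then obtain \<alpha> where "perm_fam n \<alpha>" "f = shuffle_map \<theta> n \<alpha>" unfolding Gamma_n_iff by blast
  then show "f \<in> Bij XX" using sm_Bij by simp
qed

end

locale rfin = rrec +
  assumes fin: "finite (UNIV :: 'a set)"
begin

lemma A_n_mono1: "A_n \<theta> n \<subseteq> A_n \<theta> (Suc n)"
proof
  fix f assume "f \<in> A_n \<theta> n"
  then obtain \<alpha> where a: "perm_fam n \<alpha>" "\<And>a. evenperm (\<alpha> a)" "f = shuffle_map \<theta> n \<alpha>"
    unfolding A_n_iff by blast
  have "perm_fam (Suc n) (lift n \<alpha>)" unfolding perm_fam_def using lift_perm[OF a(1)] by blast
  moreover have "\<forall>b. evenperm (lift n \<alpha> b)" using lift_even[OF fin a(1,2)] by blast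
  ultimately show "f \<in> A_n \<theta> (Suc n)" unfolding A_n_iff using sm_lift[OF a(1)] a(3) by blast
qed

lemma A_n_mono: "m \<le> n \<Longrightarrow> A_n \<theta> m \<subseteq> A_n \<theta> n"
  by (rule lift_Suc_mono_le[of "A_n \<theta>"]) (rule A_n_mono1)


lemma perm_fam_permutation: "perm_fam n \<alpha> \<Longrightarrow> permutation (\<alpha> a)"
  unfolding perm_fam_def using sp_fin permutation_permutes by blast

lemma Gamma_iff: "f \<in> Gamma \<theta> \<longleftrightarrow> (\<exists>n. f \<in> Gamma_n \<theta> n)"
  unfolding Gamma_def by blast

lemma A_all_iff: "f \<in> A_all \<theta> \<longleftrightarrow> (\<exists>n\<ge>1. f \<in> A_n \<theta> n)"
  unfolding A_all_def by auto

lemma common2: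
  assumes "f \<in> Gamma_n \<theta> m" "g \<in> Gamma_n \<theta> m'" "k \<le> N" "m \<le> N" "m' \<le> N"
  shows "\<exists>\<alpha> \<beta>. perm_fam N \<alpha> \<and> perm_fam N \<beta> \<and> f = shuffle_map \<theta> N \<alpha> \<and> g = shuffle_map \<theta> N \<beta>"
proof -
  have "f \<in> Gamma_n \<theta> N" "g \<in> Gamma_n \<theta> N" using Gamma_n_mono[OF assms(4)] Gamma_n_mono[OF assms(5)] assms(1,2) by auto
  then show ?thesis unfolding Gamma_n_iff by blast
qed

lemma Gamma_subgroup: "subgroup (Gamma \<theta>) BG"
proof
  show "Gamma \<theta> \<subseteq> carrier BG" using Gamma_n_Bij unfolding Gamma_def by (auto simp: BijGroup_def)
next
  fix x y assume "x \<in> Gamma \<theta>" "y \<in> Gamma \<theta>"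
  then obtain m m' where "x \<in> Gamma_n \<theta> m" "y \<in> Gamma_n \<theta> m'" unfolding Gamma_iff by blast
  then obtain \<alpha> \<beta> where ab: "perm_fam (max m m') \<alpha>" "perm_fam (max m m') \<beta>"
    "x = shuffle_map \<theta> (max m m') \<alpha>" "y = shuffle_map \<theta> (max m m') \<beta>"
    using common2[of x m y m' 0 "max m m'"] by auto
  have "x \<otimes>\<^bsub>BG\<^esub> y = shuffle_map \<theta> (max m m') (\<lambda>a. \<alpha> a \<circ> \<beta> a)" using sm_mult[OF ab(2,1)] ab(3,4) by simp
  moreover have "perm_fam (max m m') (\<lambda>a. \<alpha> a \<circ> \<beta> a)" by (rule perm_fam_comp[OF ab(2,1)])
  ultimately show "x \<otimes>\<^bsub>BG\<^esub> y \<in> Gamma \<theta>" unfolding Gamma_iff Gamma_n_iff by blast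
next
  show "\<one>\<^bsub>BG\<^esub> \<in> Gamma \<theta>" unfolding Gamma_iff Gamma_n_iff using sm_one[of 0] perm_fam_id by blast
next
  fix x assume "x \<in> Gamma \<theta>"
  then obtain m \<alpha> where a: "perm_fam m \<alpha>" "x = shuffle_map \<theta> m \<alpha>" unfolding Gamma_iff Gamma_n_iff by blast
  then show "inv\<^bsub>BG\<^esub> x \<in> Gamma \<theta>" using sm_inv_BG[OF a(1)] inv_fam_perm[OF a(1)]
    unfolding Gamma_iff Gamma_n_iff by blast
qed

lemma GG_group: "group GG"
  unfolding Gamma_group_def by (rule subgroup.subgroup_is_group[OF Gamma_subgroup group_BijGroup])

lemma GG_carrier[simp]: "carrier GG = Gamma \<theta>"
  and GG_mult[simp]: "x \<otimes>\<^bsub>GG\<^esub> y = x \<otimes>\<^bsub>BG\<^esub> y"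
  and GG_one[simp]: "\<one>\<^bsub>GG\<^esub> = \<one>\<^bsub>BG\<^esub>"
  by (simp_all add: Gamma_group_def)

lemma sm_Gamma: "perm_fam n \<alpha> \<Longrightarrow> shuffle_map \<theta> n \<alpha> \<in> Gamma \<theta>"
  unfolding Gamma_iff Gamma_n_iff by blast

lemma sm_inv_GG:
  assumes a: "perm_fam n \<alpha>"
  shows "inv\<^bsub>GG\<^esub> (shuffle_map \<theta> n \<alpha>) = shuffle_map \<theta> n (inv_fam \<alpha>)"
proof (rule group.inv_equality[OF GG_group])
  show "shuffle_map \<theta> n (inv_fam \<alpha>) \<otimes>\<^bsub>GG\<^esub> shuffle_map \<theta> n \<alpha> = \<one>\<^bsub>GG\<^esub>"
    using sm_mult[OF a inv_fam_perm[OF a]] inv_fam_comp(1)[OF a] sm_one[of n] by simp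
  show "shuffle_map \<theta> n \<alpha> \<in> carrier GG" using sm_Gamma[OF a] by simp
  show "shuffle_map \<theta> n (inv_fam \<alpha>) \<in> carrier GG" using sm_Gamma[OF inv_fam_perm[OF a]] by simp
qed

lemma even_comp: "perm_fam n \<alpha> \<Longrightarrow> perm_fam n \<beta> \<Longrightarrow> evenperm (\<alpha> a) \<Longrightarrow> evenperm (\<beta> a) \<Longrightarrow> evenperm (\<alpha> a \<circ> \<beta> a)"
  using evenperm_comp[OF perm_fam_permutation perm_fam_permutation] by blast

lemma even_inv: "perm_fam n \<alpha> \<Longrightarrow> evenperm (inv_fam \<alpha> a) = evenperm (\<alpha> a)"
  unfolding inv_fam_def using evenperm_inv[OF perm_fam_permutation] by blast

lemma A_common:
  assumes "x \<in> A_all \<theta>" "N \<ge> 1"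
  shows "\<exists>m\<ge>1. x \<in> A_n \<theta> m"
  using assms A_all_iff by blast

lemma A_subgroup: "subgroup (A_all \<theta>) GG"
proof
  show "A_all \<theta> \<subseteq> carrier GG"
  proof
    fix x assume "x \<in> A_all \<theta>"
    then obtain n where "x \<in> A_n \<theta> n" unfolding A_all_iff by blast
    then have "x \<in> Gamma_n \<theta> n" using A_n_Gamma_n by blast
    then show "x \<in> carrier GG" unfolding GG_carrier Gamma_iff by blast
  qed
next
  fix x y assume "x \<in> A_all \<theta>" "y \<in> A_all \<theta>"
  then obtain m m' where mm: "m \<ge> 1" "x \<in> A_n \<theta> m" "m' \<ge> 1" "y \<in> A_n \<theta> m'" unfolding A_all_iff by blast
  define N where "N = max m m'"
  have N1: "N \<ge> 1" unfolding N_def using mm by simp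
  have "x \<in> A_n \<theta> N" "y \<in> A_n \<theta> N" using A_n_mono[of m N] A_n_mono[of m' N] mm unfolding N_def by auto
  then obtain \<alpha> \<beta> where ab: "perm_fam N \<alpha>" "\<And>a. evenperm (\<alpha> a)" "x = shuffle_map \<theta> N \<alpha>"
    "perm_fam N \<beta>" "\<And>a. evenperm (\<beta> a)" "y = shuffle_map \<theta> N \<beta>" unfolding A_n_iff by blast
  have "x \<otimes>\<^bsub>GG\<^esub> y = shuffle_map \<theta> N (\<lambda>a. \<alpha> a \<circ> \<beta> a)" using sm_mult[OF ab(4,1)] ab(3,6) by simp
  moreover have "perm_fam N (\<lambda>a. \<alpha> a \<circ> \<beta> a)" by (rule perm_fam_comp[OF ab(4,1)])
  moreover have "\<forall>a. evenperm (\<alpha> a \<circ> \<beta> a)" using even_comp[OF ab(1,4) ab(2) ab(5)] by blast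
  ultimately show "x \<otimes>\<^bsub>GG\<^esub> y \<in> A_all \<theta>" unfolding A_all_iff A_n_iff using N1 by blast
next
  have "perm_fam 1 (\<lambda>a. id)" "\<forall>a. evenperm ((\<lambda>a. (id :: 'a list \<Rightarrow> 'a list)) a)" by (simp_all add: perm_fam_id evenperm_id)
  then have "shuffle_map \<theta> 1 (\<lambda>a. id) \<in> A_n \<theta> 1" unfolding A_n_iff by blast
  then show "\<one>\<^bsub>GG\<^esub> \<in> A_all \<theta>" unfolding A_all_iff using sm_one[of 1] by auto
next
  fix x assume "x \<in> A_all \<theta>"
  then obtain m \<alpha> where a: "m \<ge> 1" "perm_fam m \<alpha>" "\<And>a. evenperm (\<alpha> a)" "x = shuffle_map \<theta> m \<alpha>"
    unfolding A_all_iff A_n_iff by blast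
  have "\<forall>a. evenperm (inv_fam \<alpha> a)" using even_inv[OF a(2)] a(3) by simp
  then show "inv\<^bsub>GG\<^esub> x \<in> A_all \<theta>" using sm_inv_GG[OF a(2)] inv_fam_perm[OF a(2)] a(1,4)
    unfolding A_all_iff A_n_iff by blast
qed

lemma A_normal: "A_all \<theta> \<lhd> GG"
proof -
  have "\<forall>x\<in>carrier GG. \<forall>h\<in>A_all \<theta>. x \<otimes>\<^bsub>GG\<^esub> h \<otimes>\<^bsub>GG\<^esub> inv\<^bsub>GG\<^esub> x \<in> A_all \<theta>"
  proof (intro ballI)
    fix x h assume "x \<in> carrier GG" "h \<in> A_all \<theta>"
    then obtain m m' where mm: "x \<in> Gamma_n \<theta> m" "m' \<ge> 1" "h \<in> A_n \<theta> m'"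
      unfolding A_all_iff GG_carrier Gamma_iff by blast
    define N where "N = max m m'"
    have N1: "N \<ge> 1" unfolding N_def using mm by simp
    have "x \<in> Gamma_n \<theta> N" "h \<in> A_n \<theta> N"
      using Gamma_n_mono[of m N] A_n_mono[of m' N] mm unfolding N_def by auto
    then obtain \<alpha> \<beta> where ab: "perm_fam N \<alpha>" "x = shuffle_map \<theta> N \<alpha>"
      "perm_fam N \<beta>" "\<And>a. evenperm (\<beta> a)" "h = shuffle_map \<theta> N \<beta>"
      unfolding A_n_iff Gamma_n_iff by blast
    have ai: "perm_fam N (inv_fam \<alpha>)" by (rule inv_fam_perm[OF ab(1)])
    have ab2: "perm_fam N (\<lambda>a. \<alpha> a \<circ> \<beta> a)" by (rule perm_fam_comp[OF ab(3,1)])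
    have "x \<otimes>\<^bsub>GG\<^esub> h \<otimes>\<^bsub>GG\<^esub> inv\<^bsub>GG\<^esub> x = shuffle_map \<theta> N (\<lambda>a. (\<alpha> a \<circ> \<beta> a) \<circ> inv_fam \<alpha> a)"
      using sm_mult[OF ab(3,1)] sm_mult[OF ai ab2] sm_inv_GG[OF ab(1)] ab(2,5) by simp
    moreover have "perm_fam N (\<lambda>a. (\<alpha> a \<circ> \<beta> a) \<circ> inv_fam \<alpha> a)" by (rule perm_fam_comp[OF ai ab2])
    moreover have "\<forall>a. evenperm ((\<alpha> a \<circ> \<beta> a) \<circ> inv_fam \<alpha> a)"
    proof
      fix a
      have "evenperm ((\<alpha> a \<circ> \<beta> a) \<circ> inv_fam \<alpha> a) = (evenperm (\<alpha> a \<circ> \<beta> a) = evenperm (inv_fam \<alpha> a))"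
        by (rule evenperm_comp[OF perm_fam_permutation[OF ab2] perm_fam_permutation[OF ai]])
      moreover have "evenperm (\<alpha> a \<circ> \<beta> a) = (evenperm (\<alpha> a) = evenperm (\<beta> a))"
        by (rule evenperm_comp[OF perm_fam_permutation[OF ab(1)] perm_fam_permutation[OF ab(3)]])
      ultimately show "evenperm ((\<alpha> a \<circ> \<beta> a) \<circ> inv_fam \<alpha> a)" using even_inv[OF ab(1)] ab(4)[of a] by blast
    qed
    ultimately show "x \<otimes>\<^bsub>GG\<^esub> h \<otimes>\<^bsub>GG\<^esub> inv\<^bsub>GG\<^esub> x \<in> A_all \<theta>" unfolding A_all_iff A_n_iff using N1 by blast
  qed
  then show ?thesis using group.normal_inv_iff[OF GG_group] A_subgroup by blast
qed


definition rep :: "nat \<Rightarrow> 'a set \<Rightarrow> 'a \<Rightarrow> 'a list \<Rightarrow> 'a list" where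
  "rep N S a = (if a \<in> S \<and> (\<exists>p. p permutes subst_pow \<theta> N a \<and> \<not> evenperm p)
      then (SOME p. p permutes subst_pow \<theta> N a \<and> \<not> evenperm p) else id)"

lemma rep_props: "rep N S a permutes subst_pow \<theta> N a \<and>
   (a \<in> S \<and> (\<exists>p. p permutes subst_pow \<theta> N a \<and> \<not> evenperm p) \<longrightarrow> \<not> evenperm (rep N S a)) \<and>
   (a \<notin> S \<longrightarrow> rep N S a = id)"
proof (cases "a \<in> S \<and> (\<exists>p. p permutes subst_pow \<theta> N a \<and> \<not> evenperm p)")
  case True
  then have "(SOME p. p permutes subst_pow \<theta> N a \<and> \<not> evenperm p) permutes subst_pow \<theta> N a \<and>
      \<not> evenperm (SOME p. p permutes subst_pow \<theta> N a \<and> \<not> evenperm p)"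
    by (metis (mono_tags, lifting) someI_ex)
  then show ?thesis using True unfolding rep_def by simp
next
  case False then show ?thesis unfolding rep_def by (auto simp: permutes_id)
qed

lemma rep_perm: "perm_fam N (rep N S)"
  unfolding perm_fam_def using rep_props by blast

lemma coset_rep:
  assumes N: "N \<ge> 1" and g: "g \<in> Gamma_n \<theta> N"
  shows "\<exists>S. A_all \<theta> #>\<^bsub>GG\<^esub> g = A_all \<theta> #>\<^bsub>GG\<^esub> shuffle_map \<theta> N (rep N S)"
proof -
  obtain \<alpha> where a: "perm_fam N \<alpha>" "g = shuffle_map \<theta> N \<alpha>" using g unfolding Gamma_n_iff by blast
  define S where "S = {a. \<not> evenperm (\<alpha> a)}"
  define r where "r = rep N S"
  have rp: "perm_fam N r" unfolding r_def by (rule rep_perm)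
  have ri: "perm_fam N (inv_fam r)" by (rule inv_fam_perm[OF rp])
  define \<gamma> where "\<gamma> = (\<lambda>a. \<alpha> a \<circ> inv_fam r a)"
  have gp: "perm_fam N \<gamma>" unfolding \<gamma>_def by (rule perm_fam_comp[OF ri a(1)])
  have ge: "evenperm (\<gamma> a)" for a
  proof -
    have e1: "evenperm (\<gamma> a) = (evenperm (\<alpha> a) = evenperm (r a))"
      unfolding \<gamma>_def using evenperm_comp[OF perm_fam_permutation[OF a(1)] perm_fam_permutation[OF ri]]
        even_inv[OF rp] by simp
    show ?thesis
    proof (cases "a \<in> S")
      case True
      have "\<alpha> a permutes subst_pow \<theta> N a" using a(1) unfolding perm_fam_def by blast
      then have "\<not> evenperm (r a)" using rep_props[of N S a] True unfolding r_def S_def by auto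
      then show ?thesis using e1 True unfolding S_def by simp
    next
      case False
      then have "r a = id" using rep_props[of N S a] unfolding r_def by simp
      then show ?thesis using e1 False unfolding S_def by (simp add: evenperm_id)
    qed
  qed
  have hA: "shuffle_map \<theta> N \<gamma> \<in> A_all \<theta>" unfolding A_all_iff A_n_iff using N gp ge by blast
  have "(\<lambda>a. \<gamma> a \<circ> r a) = \<alpha>"
  proof
    fix a
    have "\<gamma> a \<circ> r a = \<alpha> a \<circ> (inv_fam r a \<circ> r a)" unfolding \<gamma>_def by (simp add: comp_assoc)
    also have "inv_fam r a \<circ> r a = id" using fun_cong[OF inv_fam_comp(1)[OF rp], of a] by simp
    finally show "\<gamma> a \<circ> r a = \<alpha> a" by (simp only: comp_id)
  qed
  then have gm: "shuffle_map \<theta> N \<gamma> \<otimes>\<^bsub>GG\<^esub> shuffle_map \<theta> N r = g"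
    using sm_mult[OF rp gp] a(2) by simp
  have sub: "A_all \<theta> \<subseteq> carrier GG" using A_subgroup subgroup.subset by blast
  have "A_all \<theta> #>\<^bsub>GG\<^esub> g = (A_all \<theta> #>\<^bsub>GG\<^esub> shuffle_map \<theta> N \<gamma>) #>\<^bsub>GG\<^esub> shuffle_map \<theta> N r"
    unfolding gm[symmetric]
    by (rule group.coset_mult_assoc[OF GG_group sub, symmetric]) (simp_all add: sm_Gamma gp rp)
  also have "A_all \<theta> #>\<^bsub>GG\<^esub> shuffle_map \<theta> N \<gamma> = A_all \<theta>"
    by (rule subgroup.rcos_const[OF A_subgroup GG_group hA])
  finally show ?thesis unfolding r_def by blast
qed

lemma finite_common:
  fixes P :: "nat \<Rightarrow> 'b \<Rightarrow> bool"
  assumes "finite F" "\<forall>C\<in>F. \<exists>n. P n C" "\<And>n m C. n \<le> m \<Longrightarrow> P n C \<Longrightarrow> P m C"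
  shows "\<exists>N. \<forall>C\<in>F. P N C"
  using assms(1,2)
proof (induction F rule: finite_induct)
  case empty then show ?case by simp
next
  case (insert C F)
  then obtain N where N: "\<forall>C\<in>F. P N C" by blast
  obtain n where n: "P n C" using insert(4) by blast
  have "\<forall>C'\<in>insert C F. P (max N n) C'"
  proof
    fix C' assume "C' \<in> insert C F"
    then show "P (max N n) C'"
    proof
      assume "C' = C" then show ?thesis using assms(3)[OF max.cobounded2 n] by simp
    next
      assume "C' \<in> F" then have "P N C'" using N by blast
      then show ?thesis by (rule assms(3)[OF max.cobounded1])
    qed
  qed
  then show ?case by blast
qed

lemma card_bound:
  assumes F: "F \<subseteq> rcosets\<^bsub>GG\<^esub> (A_all \<theta>)" "finite F"
  shows "card F \<le> 2 ^ card (UNIV :: 'a set)"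
proof -
  have ex: "\<forall>C\<in>F. \<exists>n. \<exists>g\<in>Gamma_n \<theta> n. C = A_all \<theta> #>\<^bsub>GG\<^esub> g"
  proof
    fix C assume "C \<in> F"
    then have "C \<in> (\<Union>a\<in>carrier GG. {A_all \<theta> #>\<^bsub>GG\<^esub> a})" using F(1) unfolding RCOSETS_def by blast
    then obtain a where "a \<in> Gamma \<theta>" "C = A_all \<theta> #>\<^bsub>GG\<^esub> a" by auto
    then show "\<exists>n. \<exists>g\<in>Gamma_n \<theta> n. C = A_all \<theta> #>\<^bsub>GG\<^esub> g" unfolding Gamma_iff by blast
  qed
  have "\<exists>N. \<forall>C\<in>F. \<exists>g\<in>Gamma_n \<theta> N. C = A_all \<theta> #>\<^bsub>GG\<^esub> g"
  proof (rule finite_common[OF F(2) ex])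
    fix n m C assume "n \<le> m" "\<exists>g\<in>Gamma_n \<theta> n. C = A_all \<theta> #>\<^bsub>GG\<^esub> g"
    then show "\<exists>g\<in>Gamma_n \<theta> m. C = A_all \<theta> #>\<^bsub>GG\<^esub> g" using Gamma_n_mono by blast
  qed
  then obtain N where N: "\<forall>C\<in>F. \<exists>g\<in>Gamma_n \<theta> N. C = A_all \<theta> #>\<^bsub>GG\<^esub> g" by blast
  have FI: "F \<subseteq> (\<lambda>S. A_all \<theta> #>\<^bsub>GG\<^esub> shuffle_map \<theta> (Suc N) (rep (Suc N) S)) ` UNIV"
  proof
    fix C assume "C \<in> F"
    then obtain g where g: "g \<in> Gamma_n \<theta> N" "C = A_all \<theta> #>\<^bsub>GG\<^esub> g" using N by blast
    have "g \<in> Gamma_n \<theta> (Suc N)" using g(1) Gamma_n_mono1 by blast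
    then obtain S where "A_all \<theta> #>\<^bsub>GG\<^esub> g = A_all \<theta> #>\<^bsub>GG\<^esub> shuffle_map \<theta> (Suc N) (rep (Suc N) S)"
      using coset_rep[of "Suc N" g] by auto
    then show "C \<in> (\<lambda>S. A_all \<theta> #>\<^bsub>GG\<^esub> shuffle_map \<theta> (Suc N) (rep (Suc N) S)) ` UNIV" using g(2) by blast
  qed
  have fU: "finite (UNIV :: 'a set set)"
  proof -
    have "finite (Pow (UNIV :: 'a set))" by (rule finite_Pow_iff[THEN iffD2, OF fin])
    then show ?thesis unfolding Pow_UNIV .
  qed
  from FI have "card F \<le> card ((\<lambda>S. A_all \<theta> #>\<^bsub>GG\<^esub> shuffle_map \<theta> (Suc N) (rep (Suc N) S)) ` (UNIV :: 'a set set))"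
    by (rule card_mono[rotated]) (rule finite_imageI[OF fU])
  also have "\<dots> \<le> card (UNIV :: 'a set set)" by (rule card_image_le[OF fU])
  also have "\<dots> = 2 ^ card (UNIV :: 'a set)" using card_Pow[OF fin] by simp
  finally show ?thesis .
qed

lemma rcosets_finite: "finite (rcosets\<^bsub>GG\<^esub> (A_all \<theta>))"
proof (rule ccontr)
  assume "infinite (rcosets\<^bsub>GG\<^esub> (A_all \<theta>))"
  then obtain F where "finite F" "card F = Suc (2 ^ card (UNIV :: 'a set))" "F \<subseteq> rcosets\<^bsub>GG\<^esub> (A_all \<theta>)"
    using infinite_arbitrarily_large by blast
  then have "card F \<le> 2 ^ card (UNIV :: 'a set)" using card_bound by blast
  then show False using \<open>card F = Suc (2 ^ card (UNIV :: 'a set))\<close> by simp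
qed

lemma rcosets_card: "card (rcosets\<^bsub>GG\<^esub> (A_all \<theta>)) \<le> 2 ^ card (UNIV :: 'a set)"
  using card_bound[OF subset_refl rcosets_finite] .

end


theorem lemma3p11:
  fixes \<theta> :: "'a::finite \<Rightarrow> 'a list set"
  assumes "rand_subst \<theta>" and "compatible \<theta>" and "recognisable \<theta>"
  shows "(\<forall>n\<ge>1. A_n \<theta> n \<subseteq> A_n \<theta> (Suc n))
    \<and> A_all \<theta> \<lhd> Gamma_group \<theta>
    \<and> finite (rcosets\<^bsub>Gamma_group \<theta>\<^esub> (A_all \<theta>))
    \<and> card (rcosets\<^bsub>Gamma_group \<theta>\<^esub> (A_all \<theta>)) \<le> 2 ^ card (UNIV :: 'a set)"
proof -
  interpret rfin \<theta>
    by unfold_locales (simp_all add: assms)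
  show ?thesis using A_n_mono1 A_normal rcosets_finite rcosets_card by blast
qed

end
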